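(* Let $D$ be a Dirac operator for a finite complex spectral triple over $\mathcal A$, let $\xi:=\sum_{i\neq j}P_i\,dP_j\in\Omega^1(\mathcal A)$ and $\hat\xi:=\pi(\xi)$. Suppose $\hat\xi^{\,2}=\sum_i\pi(P_i)\hat\xi^{\,2}\pi(P_i)$. Then in $\Omega^2(\mathcal A)$ one has $\sum_iP_i\xi\xi P_i=\xi\xi$, $d\xi=2\xi\xi$, and for every $\omega\in\Omega^1(\mathcal A)$ $$d\omega=\xi\omega+\omega\xi .$$ Consequently the curvature $F(H):=dH+HH$ of the one-form $H=-2\xi$ vanishes in $\Omega^2(\mathcal A)$.
   Context: Let $\mathcal A=\bigoplus_{i=1}^k M_{n_i}(\mathbb C)$ ($n_i\ge 1$), with involution $a\mapsto a^*$ given by blockwise conjugate transpose. A finite complex spectral triple over $\mathcal A$ consists of: a finite-dimensional complex Hilbert space $\mathcal H$; a faithful $*$-representation $\pi:\mathcal A\to B(\mathcal H)$; an antilinear isometry $J$ of $\mathcal H$ with $J^2=1$ such that $\pi^0(a):=J\pi(a)^*J$ defines a representation of the opposite algebra $\mathcal A^0$ and $[\pi^0(a),\pi(b)]=0$ for all $a,b\in\mathcal A$; and a grading $\gamma\in B(\mathcal H)$ with $\gamma^*=\gamma$, $\gamma^2=1$, $J\gamma=\gamma J$, $\gamma\pi(a)=\pi(a)\gamma$ for all $a$, and $\gamma=\sum_m\pi(x_m)\pi^0(y_m)$ for finitely many $x_m,y_m\in\mathcal A$. Let $P_i\in\mathcal A$ be the element with the identity matrix in the $i$-th block and zeros elsewhere.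 A Dirac operator is a self-adjoint $D\in B(\mathcal H)$ with $DJ=JD$, $D\gamma=-\gamma D$ and $[[D,\pi(a)],\pi^0(b)]=0$ for all $a,b$. Let $\Omega_u\mathcal A$ be the universal differential graded algebra of $\mathcal A$; $\pi$ extends to it by $\pi(a_0\,da_1\cdots da_n)=\pi(a_0)[D,\pi(a_1)]\cdots[D,\pi(a_n)]$. The differential algebra of the spectral triple is $\Omega(\mathcal A)=\Omega_u\mathcal A/(\ker\pi+d\ker\pi)$, i.e. $\Omega^n(\mathcal A)=\Omega^n_u\mathcal A/(\Omega^n_u\mathcal A\cap(\ker\pi+d\ker\pi))$, with the induced product and differential $d$. *)

theory Defs
  imports Complex_Main "Jordan_Normal_Form.Matrix"
begin

text \<open>Elements of A are the N x N complex matrices (N = sum of the block sizes) which are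
  block diagonal w.r.t. these blocks. Block indices are 0,...,k-1.\<close>

definition bsize :: "nat list \<Rightarrow> nat" where
  "bsize ns = sum_list ns"

definition blk :: "nat list \<Rightarrow> nat \<Rightarrow> nat" where
  "blk ns r = (LEAST i. r < sum_list (take (Suc i) ns))"

definition alg :: "nat list \<Rightarrow> complex mat set" where
  "alg ns = {M \<in> carrier_mat (bsize ns) (bsize ns).
     \<forall>r s. r < bsize ns \<longrightarrow> s < bsize ns \<longrightarrow> blk ns r \<noteq> blk ns s \<longrightarrow> M $$ (r, s) = 0}"

definition Pblk :: "nat list \<Rightarrow> nat \<Rightarrow> complex mat" where
  "Pblk ns i = mat (bsize ns) (bsize ns) (\<lambda>(r, s). if r = s \<and> blk ns r = i then 1 else 0)"

definition adj :: "complex mat \<Rightarrow> complex mat" where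
  "adj M = mat (dim_col M) (dim_row M) (\<lambda>(i, j). cnj (M $$ (j, i)))"

definition vnorm2 :: "complex vec \<Rightarrow> real" where
  "vnorm2 v = (\<Sum>i<dim_vec v. (cmod (v $ i))\<^sup>2)"

definition comm :: "complex mat \<Rightarrow> complex mat \<Rightarrow> complex mat" where
  "comm X Y = X * Y - Y * X"

text \<open>H = C^m; operators are m x m complex matrices; J is an arbitrary map on vectors.\<close>

definition pi0 :: "(complex mat \<Rightarrow> complex mat) \<Rightarrow> (complex vec \<Rightarrow> complex vec)
    \<Rightarrow> complex mat \<Rightarrow> complex vec \<Rightarrow> complex vec" where
  "pi0 \<pi> J a v = J (adj (\<pi> a) *\<^sub>v J v)"

definition vsum :: "nat \<Rightarrow> complex vec list \<Rightarrow> complex vec" where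
  "vsum m vs = foldr (+) vs (0\<^sub>v m)"

definition star_rep :: "nat list \<Rightarrow> nat \<Rightarrow> (complex mat \<Rightarrow> complex mat) \<Rightarrow> bool" where
  "star_rep ns m \<pi> \<longleftrightarrow>
     (\<forall>a\<in>alg ns. \<pi> a \<in> carrier_mat m m) \<and>
     (\<forall>a\<in>alg ns. \<forall>b\<in>alg ns. \<pi> (a + b) = \<pi> a + \<pi> b) \<and>
     (\<forall>c. \<forall>a\<in>alg ns. \<pi> (c \<cdot>\<^sub>m a) = c \<cdot>\<^sub>m \<pi> a) \<and>
     (\<forall>a\<in>alg ns. \<forall>b\<in>alg ns. \<pi> (a * b) = \<pi> a * \<pi> b) \<and>
     (\<forall>a\<in>alg ns. \<pi> (adj a) = adj (\<pi> a)) \<and>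
     \<pi> (1\<^sub>m (bsize ns)) = 1\<^sub>m m"

definition finite_spectral_triple ::
  "nat list \<Rightarrow> nat \<Rightarrow> (complex mat \<Rightarrow> complex mat) \<Rightarrow> (complex vec \<Rightarrow> complex vec)
     \<Rightarrow> complex mat \<Rightarrow> bool" where
  "finite_spectral_triple ns m \<pi> J \<gamma> \<longleftrightarrow>
     (\<forall>n \<in> set ns. n \<ge> 1) \<and>
     star_rep ns m \<pi> \<and> inj_on \<pi> (alg ns) \<and>
     \<comment> \<open>J antilinear isometry with J^2 = 1\<close>
     (\<forall>v \<in> carrier_vec m. J v \<in> carrier_vec m) \<and>
     (\<forall>v \<in> carrier_vec m. \<forall>w \<in> carrier_vec m. J (v + w) = J v + J w) \<and>
     (\<forall>c. \<forall>v \<in> carrier_vec m. J (c \<cdot>\<^sub>v v) = cnj c \<cdot>\<^sub>v J v) \<and>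
     (\<forall>v \<in> carrier_vec m. vnorm2 (J v) = vnorm2 v) \<and>
     (\<forall>v \<in> carrier_vec m. J (J v) = v) \<and>
     \<comment> \<open>pi0 is a representation of the opposite algebra\<close>
     (\<forall>a\<in>alg ns. \<forall>b\<in>alg ns. \<forall>v \<in> carrier_vec m. pi0 \<pi> J (a + b) v = pi0 \<pi> J a v + pi0 \<pi> J b v) \<and>
     (\<forall>c. \<forall>a\<in>alg ns. \<forall>v \<in> carrier_vec m. pi0 \<pi> J (c \<cdot>\<^sub>m a) v = c \<cdot>\<^sub>v pi0 \<pi> J a v) \<and>
     (\<forall>a\<in>alg ns. \<forall>b\<in>alg ns. \<forall>v \<in> carrier_vec m. pi0 \<pi> J (a * b) v = pi0 \<pi> J b (pi0 \<pi> J a v)) \<and>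
     \<comment> \<open>[pi0(a), pi(b)] = 0\<close>
     (\<forall>a\<in>alg ns. \<forall>b\<in>alg ns. \<forall>v \<in> carrier_vec m. pi0 \<pi> J a (\<pi> b *\<^sub>v v) = \<pi> b *\<^sub>v pi0 \<pi> J a v) \<and>
     \<comment> \<open>grading\<close>
     \<gamma> \<in> carrier_mat m m \<and> adj \<gamma> = \<gamma> \<and> \<gamma> * \<gamma> = 1\<^sub>m m \<and>
     (\<forall>v \<in> carrier_vec m. J (\<gamma> *\<^sub>v v) = \<gamma> *\<^sub>v J v) \<and>
     (\<forall>a\<in>alg ns. \<gamma> * \<pi> a = \<pi> a * \<gamma>) \<and>
     (\<exists>xys. (\<forall>(x, y) \<in> set xys. x \<in> alg ns \<and> y \<in> alg ns) \<and>
        (\<forall>v \<in> carrier_vec m. \<gamma> *\<^sub>v v = vsum m (map (\<lambda>(x, y). \<pi> x *\<^sub>v pi0 \<pi> J y v) xys)))"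

definition dirac_operator ::
  "nat list \<Rightarrow> nat \<Rightarrow> (complex mat \<Rightarrow> complex mat) \<Rightarrow> (complex vec \<Rightarrow> complex vec)
     \<Rightarrow> complex mat \<Rightarrow> complex mat \<Rightarrow> bool" where
  "dirac_operator ns m \<pi> J \<gamma> D \<longleftrightarrow>
     D \<in> carrier_mat m m \<and> adj D = D \<and>
     (\<forall>v \<in> carrier_vec m. D *\<^sub>v J v = J (D *\<^sub>v v)) \<and>
     D * \<gamma> = - (\<gamma> * D) \<and>
     (\<forall>a\<in>alg ns. \<forall>b\<in>alg ns. \<forall>v \<in> carrier_vec m.
        comm D (\<pi> a) *\<^sub>v pi0 \<pi> J b v = pi0 \<pi> J b (comm D (\<pi> a) *\<^sub>v v))"

text \<open>A word [a0, a1, ..., an] stands for the universal form a0 da1 ... dan in Omega_u^n A;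
  a list of words stands for their sum. Every element of Omega_u A is represented this way
  (scalars are absorbed into a0). All operations below are the operations of Omega_u A
  computed on representatives via the Leibniz rule.\<close>

type_synonym uform = "complex mat list list"

definition is_uform :: "nat list \<Rightarrow> nat \<Rightarrow> uform \<Rightarrow> bool" where
  "is_uform ns n u \<longleftrightarrow> (\<forall>w \<in> set u. length w = Suc n \<and> set w \<subseteq> alg ns)"

definition uadd :: "uform \<Rightarrow> uform \<Rightarrow> uform" where
  "uadd u v = u @ v"

definition uneg :: "uform \<Rightarrow> uform" where
  "uneg u = map (\<lambda>w. (- hd w) # tl w) u"

definition usub :: "uform \<Rightarrow> uform \<Rightarrow> uform" where
  "usub u v = uadd u (uneg v)"

definition ud :: "nat list \<Rightarrow> uform \<Rightarrow> uform" where
  "ud ns u = map (\<lambda>w. 1\<^sub>m (bsize ns) # w) u"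

text \<open>rmul x as b computes (x da1 ... dak) b using da b = d(ab) - a db\<close>
fun rmul :: "nat list \<Rightarrow> complex mat \<Rightarrow> complex mat list \<Rightarrow> complex mat \<Rightarrow> uform" where
  "rmul ns x [] b = [[x * b]]"
| "rmul ns x (a # as) b =
     concat (map (\<lambda>c. [x # (a * hd c) # tl c, (- (x * a)) # c]) (rmul ns (1\<^sub>m (bsize ns)) as b))"

definition wmul :: "nat list \<Rightarrow> complex mat list \<Rightarrow> complex mat list \<Rightarrow> uform" where
  "wmul ns w v = map (\<lambda>c. c @ tl v) (rmul ns (hd w) (tl w) (hd v))"

definition umul :: "nat list \<Rightarrow> uform \<Rightarrow> uform \<Rightarrow> uform" where
  "umul ns u v = concat (map (\<lambda>w. concat (map (\<lambda>w'. wmul ns w w') v)) u)"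

definition piword :: "nat \<Rightarrow> (complex mat \<Rightarrow> complex mat) \<Rightarrow> complex mat \<Rightarrow> complex mat list \<Rightarrow> complex mat" where
  "piword m \<pi> D w = \<pi> (hd w) * foldr (\<lambda>a M. comm D (\<pi> a) * M) (tl w) (1\<^sub>m m)"

definition piform :: "nat \<Rightarrow> (complex mat \<Rightarrow> complex mat) \<Rightarrow> complex mat \<Rightarrow> uform \<Rightarrow> complex mat" where
  "piform m \<pi> D u = foldr (\<lambda>w M. piword m \<pi> D w + M) u (0\<^sub>m m m)"

text \<open>Equality in Omega^n(A) = Omega_u^n A / (Omega_u^n A \<inter> (ker pi + d ker pi)), n \<ge> 1:
  u - v lies in ker pi + d ker pi, i.e. u - v = k + dj with j \<in> Omega_u^(n-1) \<inter> ker pi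
  and k \<in> Omega_u^n \<inter> ker pi.\<close>
definition omega_eq :: "nat list \<Rightarrow> nat \<Rightarrow> (complex mat \<Rightarrow> complex mat) \<Rightarrow> complex mat
    \<Rightarrow> nat \<Rightarrow> uform \<Rightarrow> uform \<Rightarrow> bool" where
  "omega_eq ns m \<pi> D n u v \<longleftrightarrow>
     (\<exists>j. is_uform ns (n - 1) j \<and> piform m \<pi> D j = 0\<^sub>m m m \<and>
          piform m \<pi> D (usub (usub u v) (ud ns j)) = 0\<^sub>m m m)"

definition xi :: "nat list \<Rightarrow> uform" where
  "xi ns = concat (map (\<lambda>i. concat (map (\<lambda>j. if i \<noteq> j then [[Pblk ns i, Pblk ns j]] else [])
             [0..<length ns])) [0..<length ns])"

end

theory Submission
  imports Defs
begin


definition msum :: "nat \<Rightarrow> complex mat list \<Rightarrow> complex mat" where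
  "msum n Ms = foldr (+) Ms (0\<^sub>m n n)"

lemma msum_Nil[simp]: "msum n [] = 0\<^sub>m n n" by (simp add: msum_def)
lemma msum_Cons[simp]: "msum n (M # Ms) = M + msum n Ms" by (simp add: msum_def)

lemma msum_dim[simp]: "dim_row (msum n Ms) = n" "dim_col (msum n Ms) = n"
  by (induct Ms) auto

lemma msum_carrier[simp,intro]: "\<forall>M\<in>set Ms. M \<in> carrier_mat n n \<Longrightarrow> msum n Ms \<in> carrier_mat n n"
  by (induct Ms) auto

lemma msum_append: "\<forall>M\<in>set (xs @ ys). M \<in> carrier_mat n n \<Longrightarrow> msum n (xs @ ys) = msum n xs + msum n ys"
proof (induct xs)
  case Nil thus ?case by simp
next
  case (Cons a xs)
  have c: "a \<in> carrier_mat n n" "msum n xs \<in> carrier_mat n n" "msum n ys \<in> carrier_mat n n"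
    using Cons.prems by auto
  show ?case using Cons by (simp add: assoc_add_mat[OF c])
qed

lemma msum_map_add: "\<forall>x\<in>set xs. f x \<in> carrier_mat n n \<Longrightarrow> \<forall>x\<in>set xs. g x \<in> carrier_mat n n \<Longrightarrow>
  msum n (map (\<lambda>x. f x + g x) xs) = msum n (map f xs) + msum n (map g xs)"
proof (induct xs)
  case Nil thus ?case by simp
next
  case (Cons a xs)
  have c: "f a \<in> carrier_mat n n" "g a \<in> carrier_mat n n" "msum n (map f xs) \<in> carrier_mat n n" "msum n (map g xs) \<in> carrier_mat n n"
    using Cons.prems by auto
  have "f a + g a + (msum n (map f xs) + msum n (map g xs)) = f a + msum n (map f xs) + (g a + msum n (map g xs))"
    using c by (intro eq_matI) (auto simp: ac_simps)
  thus ?case using Cons by simp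
qed

lemma msum_map_uminus: "\<forall>x\<in>set xs. f x \<in> carrier_mat n n \<Longrightarrow>
  msum n (map (\<lambda>x. - f x) xs) = - msum n (map f xs)"
proof (induct xs)
  case Nil thus ?case by (intro eq_matI) auto
next
  case (Cons a xs)
  have c: "f a \<in> carrier_mat n n" "msum n (map f xs) \<in> carrier_mat n n"
    using Cons.prems by auto
  thus ?case using Cons by (simp, insert c, intro eq_matI, auto)
qed

lemma msum_map_zero: "msum n (map (\<lambda>x. 0\<^sub>m n n) xs) = 0\<^sub>m n n"
  by (induct xs) auto

lemma mult_msum_left: "A \<in> carrier_mat n n \<Longrightarrow> \<forall>M\<in>set Ms. M \<in> carrier_mat n n \<Longrightarrow>
   A * msum n Ms = msum n (map ((*) A) Ms)"
proof (induct Ms)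
  case Nil thus ?case by simp
next
  case (Cons a xs)
  have c: "a \<in> carrier_mat n n" "msum n xs \<in> carrier_mat n n" using Cons.prems by auto
  thus ?case using Cons by (simp add: mult_add_distrib_mat[OF Cons(2) c])
qed

lemma mult_msum_right: "A \<in> carrier_mat n n \<Longrightarrow> \<forall>M\<in>set Ms. M \<in> carrier_mat n n \<Longrightarrow>
   msum n Ms * A = msum n (map (\<lambda>M. M * A) Ms)"
proof (induct Ms)
  case Nil thus ?case by simp
next
  case (Cons a xs)
  have c: "a \<in> carrier_mat n n" "msum n xs \<in> carrier_mat n n" using Cons.prems by auto
  thus ?case using Cons by (simp add: add_mult_distrib_mat[OF c Cons(2)])
qed

lemma smult_msum: "\<forall>M\<in>set Ms. M \<in> carrier_mat n n \<Longrightarrow>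
   c \<cdot>\<^sub>m msum n Ms = msum n (map (\<lambda>M. c \<cdot>\<^sub>m M) Ms)"
proof (induct Ms)
  case Nil thus ?case by (intro eq_matI) auto
next
  case (Cons a xs)
  have c: "a \<in> carrier_mat n n" "msum n xs \<in> carrier_mat n n" using Cons.prems by auto
  thus ?case using Cons by (simp add: add_smult_distrib_left_mat[OF c])
qed

lemma msum_concat: "\<forall>M\<in>set (concat Mss). M \<in> carrier_mat n n \<Longrightarrow>
   msum n (concat Mss) = msum n (map (msum n) Mss)"
proof (induct Mss)
  case Nil thus ?case by simp
next
  case (Cons a xs)
  thus ?case by (simp add: msum_append)
qed

lemma msum_if_neq:
  assumes "distinct xs" "i \<in> set xs" "\<forall>x\<in>set xs. f x \<in> carrier_mat n n"
  shows "msum n (map (\<lambda>j. if i \<noteq> j then f j else 0\<^sub>m n n) xs) = msum n (map f xs) - f i"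
  using assms
proof (induct xs)
  case Nil thus ?case by simp
next
  case (Cons a xs)
  show ?case
  proof (cases "a = i")
    case True
    hence "i \<notin> set xs" using Cons by auto
    hence me: "map (\<lambda>j. if i \<noteq> j then f j else 0\<^sub>m n n) xs = map f xs" by auto
    have e: "msum n (map (\<lambda>j. if i \<noteq> j then f j else 0\<^sub>m n n) (a#xs)) = 0\<^sub>m n n + msum n (map f xs)"
      using True by (simp only: list.map msum_Cons me, simp)
    have c: "f i \<in> carrier_mat n n" "msum n (map f xs) \<in> carrier_mat n n" using Cons.prems by auto
    show ?thesis unfolding e using True c
      by (simp, insert c, intro eq_matI, auto)
  next
    case False
    hence IH: "msum n (map (\<lambda>j. if i \<noteq> j then f j else 0\<^sub>m n n) xs) = msum n (map f xs) - f i"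
      using Cons by auto
    have c: "f i \<in> carrier_mat n n" "msum n (map f xs) \<in> carrier_mat n n" "f a \<in> carrier_mat n n" using Cons.prems by auto
    show ?thesis using False IH c by (simp, insert c, intro eq_matI, auto)
  qed
qed


lemma sq_mult_carrier[simp]: "A \<in> carrier_mat n n \<Longrightarrow> B \<in> carrier_mat n n \<Longrightarrow> A * B \<in> carrier_mat n n"
  by (rule mult_carrier_mat)
lemma sq_add_carrier[simp]: "A \<in> carrier_mat n n \<Longrightarrow> B \<in> carrier_mat n n \<Longrightarrow> A + B \<in> carrier_mat n n"
  by (rule add_carrier_mat)
lemma sq_minus_carrier[simp]: "A \<in> carrier_mat n n \<Longrightarrow> B \<in> carrier_mat n n \<Longrightarrow> A - B \<in> carrier_mat n n"
  by (rule minus_carrier_mat)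
lemma sq_uminus_carrier[simp]: "A \<in> carrier_mat n n \<Longrightarrow> - A \<in> carrier_mat n n"
  by (rule uminus_carrier_mat)
lemma sq_smult_carrier[simp]: "A \<in> carrier_mat n n \<Longrightarrow> c \<cdot>\<^sub>m A \<in> carrier_mat n n"
  by simp

lemma sq_assoc: "A \<in> carrier_mat n n \<Longrightarrow> B \<in> carrier_mat n n \<Longrightarrow> C \<in> carrier_mat n n \<Longrightarrow> A * B * C = A * (B * C)"
  by (rule assoc_mult_mat)
lemma sq_distL: "A \<in> carrier_mat n n \<Longrightarrow> B \<in> carrier_mat n n \<Longrightarrow> C \<in> carrier_mat n n \<Longrightarrow> A * (B + C) = A * B + A * C"
  by (rule mult_add_distrib_mat)
lemma sq_distR: "A \<in> carrier_mat n n \<Longrightarrow> B \<in> carrier_mat n n \<Longrightarrow> C \<in> carrier_mat n n \<Longrightarrow> (A + B) * C = A * C + B * C"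
  by (rule add_mult_distrib_mat)
lemma sq_minusL: "A \<in> carrier_mat n n \<Longrightarrow> B \<in> carrier_mat n n \<Longrightarrow> C \<in> carrier_mat n n \<Longrightarrow> (A::complex mat) * (B - C) = A * B - A * C"
  by (rule mult_minus_distrib_mat)
lemma sq_minusR: "A \<in> carrier_mat n n \<Longrightarrow> B \<in> carrier_mat n n \<Longrightarrow> C \<in> carrier_mat n n \<Longrightarrow> ((A::complex mat) - B) * C = A * C - B * C"
  by (rule minus_mult_distrib_mat)
lemma sq_uminusL: "A \<in> carrier_mat n n \<Longrightarrow> B \<in> carrier_mat n n \<Longrightarrow> (- (A::complex mat)) * B = - (A * B)"
  by simp
lemma sq_uminusR: "A \<in> carrier_mat n n \<Longrightarrow> B \<in> carrier_mat n n \<Longrightarrow> (A::complex mat) * (- B) = - (A * B)"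
  by simp
lemma sq_smultL: "A \<in> carrier_mat n n \<Longrightarrow> B \<in> carrier_mat n n \<Longrightarrow> (c \<cdot>\<^sub>m (A::complex mat)) * B = c \<cdot>\<^sub>m (A * B)"
  by (rule mult_smult_assoc_mat)
lemma sq_smultR: "A \<in> carrier_mat n n \<Longrightarrow> B \<in> carrier_mat n n \<Longrightarrow> (A::complex mat) * (c \<cdot>\<^sub>m B) = c \<cdot>\<^sub>m (A * B)"
  by (rule mult_smult_distrib)
lemma sq_oneL: "A \<in> carrier_mat n n \<Longrightarrow> 1\<^sub>m n * (A::complex mat) = A" by simp
lemma sq_oneR: "A \<in> carrier_mat n n \<Longrightarrow> (A::complex mat) * 1\<^sub>m n = A" by simp
lemma sq_zeroL: "A \<in> carrier_mat n n \<Longrightarrow> 0\<^sub>m n n * (A::complex mat) = 0\<^sub>m n n" by simp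
lemma sq_zeroR: "A \<in> carrier_mat n n \<Longrightarrow> (A::complex mat) * 0\<^sub>m n n = 0\<^sub>m n n" by simp

lemmas ring_norm = sq_assoc sq_distL sq_distR sq_minusL sq_minusR sq_uminusL sq_uminusR sq_smultL sq_smultR

lemma index_mult_mat_sum: "A \<in> carrier_mat n k \<Longrightarrow> B \<in> carrier_mat k n' \<Longrightarrow> i < n \<Longrightarrow> j < n' \<Longrightarrow>
  (A * B) $$ (i, j) = (\<Sum>t<k. A $$ (i, t) * B $$ (t, j))"
  by (simp add: scalar_prod_def lessThan_atLeast0)

definition dmat :: "nat \<Rightarrow> (nat \<Rightarrow> bool) \<Rightarrow> complex mat" where
  "dmat n P = mat n n (\<lambda>(r, s). if r = s \<and> P r then 1 else 0)"

lemma dmat_carrier[simp]: "dmat n P \<in> carrier_mat n n" by (simp add: dmat_def)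

lemma dmat_mult_left: "A \<in> carrier_mat n n' \<Longrightarrow> r < n \<Longrightarrow> s < n' \<Longrightarrow>
  (dmat n P * A) $$ (r, s) = (if P r then A $$ (r, s) else 0)"
proof -
  assume A: "A \<in> carrier_mat n n'" and r: "r < n" and s: "s < n'"
  have "(dmat n P * A) $$ (r, s) = (\<Sum>t<n. dmat n P $$ (r, t) * A $$ (t, s))"
    using index_mult_mat_sum[OF dmat_carrier A r s] .
  also have "\<dots> = (\<Sum>t<n. if t = r then (if P r then A $$ (r, s) else 0) else 0)"
    by (rule sum.cong, auto simp: dmat_def r)
  also have "\<dots> = (if P r then A $$ (r, s) else 0)" using r by simp
  finally show ?thesis .
qed

lemma dmat_mult_right: "A \<in> carrier_mat n' n \<Longrightarrow> r < n' \<Longrightarrow> s < n \<Longrightarrow>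
  (A * dmat n P) $$ (r, s) = (if P s then A $$ (r, s) else 0)"
proof -
  assume A: "A \<in> carrier_mat n' n" and r: "r < n'" and s: "s < n"
  have "(A * dmat n P) $$ (r, s) = (\<Sum>t<n. A $$ (r, t) * dmat n P $$ (t, s))"
    using index_mult_mat_sum[OF A dmat_carrier r s] .
  also have "\<dots> = (\<Sum>t<n. if t = s then (if P s then A $$ (r, s) else 0) else 0)"
    by (rule sum.cong, auto simp: dmat_def s)
  also have "\<dots> = (if P s then A $$ (r, s) else 0)" using s by simp
  finally show ?thesis .
qed

lemma Pblk_dmat: "Pblk ns i = dmat (bsize ns) (\<lambda>r. blk ns r = i)"
  by (simp add: Pblk_def dmat_def)

lemma Pblk_carrier[simp]: "Pblk ns i \<in> carrier_mat (bsize ns) (bsize ns)"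
  by (simp add: Pblk_def)

lemma algD: "a \<in> alg ns \<Longrightarrow> a \<in> carrier_mat (bsize ns) (bsize ns)"
  by (simp add: alg_def)

lemma algD2: "a \<in> alg ns \<Longrightarrow> r < bsize ns \<Longrightarrow> s < bsize ns \<Longrightarrow> blk ns r \<noteq> blk ns s \<Longrightarrow> a $$ (r, s) = 0"
  by (simp add: alg_def)

lemma algI: "a \<in> carrier_mat (bsize ns) (bsize ns) \<Longrightarrow> (\<And>r s. r < bsize ns \<Longrightarrow> s < bsize ns \<Longrightarrow> blk ns r \<noteq> blk ns s \<Longrightarrow> a $$ (r, s) = 0) \<Longrightarrow> a \<in> alg ns"
  by (simp add: alg_def)

lemma alg_add[simp,intro]: "a \<in> alg ns \<Longrightarrow> b \<in> alg ns \<Longrightarrow> a + b \<in> alg ns"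
  by (rule algI, auto dest: algD algD2 simp: alg_def)

lemma alg_uminus[simp,intro]: "a \<in> alg ns \<Longrightarrow> - a \<in> alg ns"
  by (rule algI, auto dest: algD algD2 simp: alg_def)

lemma alg_minus[simp,intro]: "a \<in> alg ns \<Longrightarrow> b \<in> alg ns \<Longrightarrow> a - b \<in> alg ns"
  by (rule algI, auto dest: algD algD2 simp: alg_def)

lemma alg_smult[simp,intro]: "a \<in> alg ns \<Longrightarrow> c \<cdot>\<^sub>m a \<in> alg ns"
  by (rule algI, auto dest: algD algD2 simp: alg_def)

lemma alg_zero[simp,intro]: "0\<^sub>m (bsize ns) (bsize ns) \<in> alg ns"
  by (rule algI, auto)

lemma alg_one[simp,intro]: "1\<^sub>m (bsize ns) \<in> alg ns"
  by (rule algI, auto)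

lemma alg_mult[simp,intro]: assumes a: "a \<in> alg ns" and b: "b \<in> alg ns" shows "a * b \<in> alg ns"
proof (rule algI)
  show "a * b \<in> carrier_mat (bsize ns) (bsize ns)" using a b by (auto dest!: algD)
  fix r s assume r: "r < bsize ns" and s: "s < bsize ns" and rs: "blk ns r \<noteq> blk ns s"
  have "(a * b) $$ (r, s) = (\<Sum>t<bsize ns. a $$ (r, t) * b $$ (t, s))"
    using index_mult_mat_sum[OF algD[OF a] algD[OF b] r s] .
  also have "\<dots> = 0"
  proof (rule sum.neutral, rule ballI)
    fix t assume t: "t \<in> {..<bsize ns}"
    show "a $$ (r, t) * b $$ (t, s) = 0"
    proof (cases "blk ns r = blk ns t")
      case True thus ?thesis using algD2[OF b, of t s] t s rs by auto
    next
      case False thus ?thesis using algD2[OF a, of r t] t r by auto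
    qed
  qed
  finally show "(a * b) $$ (r, s) = 0" .
qed

lemma Pblk_alg[simp,intro]: "Pblk ns i \<in> alg ns"
  by (rule algI, auto simp: Pblk_def)

lemma dmat_dims[simp]: "dim_row (dmat n P) = n" "dim_col (dmat n P) = n"
  by (simp_all add: dmat_def)

lemma dmat_index[simp]: "r < n \<Longrightarrow> s < n \<Longrightarrow> dmat n P $$ (r, s) = (if r = s \<and> P r then 1 else 0)"
  by (simp add: dmat_def)

lemma dmat_mult: "dmat n P * dmat n Q = dmat n (\<lambda>r. P r \<and> Q r)"
proof (rule eq_matI)
  fix r s assume "r < dim_row (dmat n (\<lambda>r. P r \<and> Q r))" "s < dim_col (dmat n (\<lambda>r. P r \<and> Q r))"
  hence r: "r < n" and s: "s < n" by auto
  show "(dmat n P * dmat n Q) $$ (r, s) = dmat n (\<lambda>r. P r \<and> Q r) $$ (r, s)"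
    unfolding dmat_mult_left[OF dmat_carrier r s] using r s by auto
qed auto

lemma dmat_false: "dmat n (\<lambda>r. False) = 0\<^sub>m n n"
  by (rule eq_matI, auto)

lemma Pblk_mult: "Pblk ns i * Pblk ns j = (if i = j then Pblk ns i else 0\<^sub>m (bsize ns) (bsize ns))"
  unfolding Pblk_dmat dmat_mult by (cases "i = j", auto simp: dmat_false[symmetric])

lemma Pblk_comm: assumes a: "a \<in> alg ns" shows "Pblk ns i * a = a * Pblk ns i"
proof (rule eq_matI)
  have A: "a \<in> carrier_mat (bsize ns) (bsize ns)" using algD[OF a] .
  fix r s assume "r < dim_row (a * Pblk ns i)" "s < dim_col (a * Pblk ns i)"
  hence r: "r < bsize ns" and s: "s < bsize ns" using A by (auto simp: Pblk_def)
  show "(Pblk ns i * a) $$ (r, s) = (a * Pblk ns i) $$ (r, s)"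
    unfolding Pblk_dmat dmat_mult_left[OF A r s] dmat_mult_right[OF A r s]
    using algD2[OF a r s] by auto
qed (insert algD[OF a], auto simp: Pblk_def)

lemma blk_less: assumes r: "r < bsize ns" shows "blk ns r < length ns"
proof -
  have ne: "ns \<noteq> []" using r by (auto simp: bsize_def)
  have "take (Suc (length ns - 1)) ns = ns" using ne by simp
  hence "r < sum_list (take (Suc (length ns - 1)) ns)" using r by (simp add: bsize_def)
  hence "blk ns r \<le> length ns - 1" unfolding blk_def by (rule Least_le)
  thus ?thesis using ne by (cases ns) auto
qed


lemma add_dmat: "(\<And>r. r < n \<Longrightarrow> \<not> (P r \<and> Q r)) \<Longrightarrow> dmat n P + dmat n Q = dmat n (\<lambda>r. P r \<or> Q r)"
  by (rule eq_matI, auto)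

lemma msum_dmat: "distinct xs \<Longrightarrow> (\<And>r i j. r < n \<Longrightarrow> i \<in> set xs \<Longrightarrow> j \<in> set xs \<Longrightarrow> P i r \<Longrightarrow> P j r \<Longrightarrow> i = j) \<Longrightarrow>
   msum n (map (\<lambda>i. dmat n (P i)) xs) = dmat n (\<lambda>r. \<exists>i\<in>set xs. P i r)"
proof (induct xs)
  case Nil thus ?case by (simp add: dmat_false)
next
  case (Cons a xs)
  have IH: "msum n (map (\<lambda>i. dmat n (P i)) xs) = dmat n (\<lambda>r. \<exists>i\<in>set xs. P i r)"
    using Cons by auto
  have "dmat n (P a) + dmat n (\<lambda>r. \<exists>i\<in>set xs. P i r) = dmat n (\<lambda>r. P a r \<or> (\<exists>i\<in>set xs. P i r))"
    by (rule add_dmat, insert Cons.prems, fastforce)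
  thus ?case using IH by simp
qed

lemma Pblk_sum: "msum (bsize ns) (map (Pblk ns) [0..<length ns]) = 1\<^sub>m (bsize ns)"
proof -
  have "msum (bsize ns) (map (Pblk ns) [0..<length ns]) = dmat (bsize ns) (\<lambda>r. \<exists>i\<in>set [0..<length ns]. blk ns r = i)"
    unfolding Pblk_dmat by (rule msum_dmat, auto)
  also have "\<dots> = 1\<^sub>m (bsize ns)"
    by (rule eq_matI, auto simp: blk_less)
  finally show ?thesis .
qed

definition E :: "nat \<Rightarrow> nat \<Rightarrow> nat \<Rightarrow> complex mat" where
  "E n r s = mat n n (\<lambda>(u, v). if u = r \<and> v = s then 1 else 0)"

lemma E_carrier[simp]: "E n r s \<in> carrier_mat n n" by (simp add: E_def)
lemma E_dims[simp]: "dim_row (E n r s) = n" "dim_col (E n r s) = n" by (simp_all add: E_def)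
lemma E_index[simp]: "u < n \<Longrightarrow> v < n \<Longrightarrow> E n r s $$ (u, v) = (if u = r \<and> v = s then 1 else 0)"
  by (simp add: E_def)

lemma E_mult_left: "A \<in> carrier_mat n n' \<Longrightarrow> u < n \<Longrightarrow> v < n' \<Longrightarrow> s < n \<Longrightarrow>
  (E n r s * A) $$ (u, v) = (if u = r then A $$ (s, v) else 0)"
proof -
  assume A: "A \<in> carrier_mat n n'" and u: "u < n" and v: "v < n'" and s: "s < n"
  have "(E n r s * A) $$ (u, v) = (\<Sum>t<n. E n r s $$ (u, t) * A $$ (t, v))"
    using index_mult_mat_sum[OF E_carrier A u v] .
  also have "\<dots> = (\<Sum>t<n. if t = s then (if u = r then A $$ (s, v) else 0) else 0)"
    by (rule sum.cong, auto simp: u)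
  also have "\<dots> = (if u = r then A $$ (s, v) else 0)" using s by simp
  finally show ?thesis .
qed

lemma E_mult_right: "A \<in> carrier_mat n' n \<Longrightarrow> u < n' \<Longrightarrow> v < n \<Longrightarrow> r < n \<Longrightarrow>
  (A * E n r s) $$ (u, v) = (if v = s then A $$ (u, r) else 0)"
proof -
  assume A: "A \<in> carrier_mat n' n" and u: "u < n'" and v: "v < n" and r: "r < n"
  have "(A * E n r s) $$ (u, v) = (\<Sum>t<n. A $$ (u, t) * E n r s $$ (t, v))"
    using index_mult_mat_sum[OF A E_carrier u v] .
  also have "\<dots> = (\<Sum>t<n. if t = r then (if v = s then A $$ (u, r) else 0) else 0)"
    by (rule sum.cong, auto simp: v)
  also have "\<dots> = (if v = s then A $$ (u, r) else 0)" using r by simp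
  finally show ?thesis .
qed

lemma E_sandwich: assumes X: "X \<in> carrier_mat n n" and rs: "s < n" "r' < n"
  shows "E n r s * X * E n r' s' = X $$ (s, r') \<cdot>\<^sub>m E n r s'"
proof (rule eq_matI)
  fix u v assume "u < dim_row (X $$ (s, r') \<cdot>\<^sub>m E n r s')" "v < dim_col (X $$ (s, r') \<cdot>\<^sub>m E n r s')"
  hence u: "u < n" and v: "v < n" by auto
  have EX: "E n r s * X \<in> carrier_mat n n" using X by (metis E_carrier mult_carrier_mat)
  show "(E n r s * X * E n r' s') $$ (u, v) = (X $$ (s, r') \<cdot>\<^sub>m E n r s') $$ (u, v)"
    unfolding E_mult_right[OF EX u v rs(2)] E_mult_left[OF X u rs(2) rs(1)]
    using u v by auto
qed (insert X, auto)

lemma E_alg: "r < bsize ns \<Longrightarrow> s < bsize ns \<Longrightarrow> blk ns r = blk ns s \<Longrightarrow> E (bsize ns) r s \<in> alg ns"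
  by (rule algI, auto)

lemma E_sum_Pblk: "msum (bsize ns) (map (\<lambda>r. E (bsize ns) r r) (filter (\<lambda>r. blk ns r = i) [0..<bsize ns])) = Pblk ns i"
proof -
  have "E (bsize ns) r r = dmat (bsize ns) (\<lambda>u. u = r)" if "r < bsize ns" for r
    by (rule eq_matI, auto)
  hence "map (\<lambda>r. E (bsize ns) r r) (filter (\<lambda>r. blk ns r = i) [0..<bsize ns])
     = map (\<lambda>r. dmat (bsize ns) (\<lambda>u. u = r)) (filter (\<lambda>r. blk ns r = i) [0..<bsize ns])"
    by auto
  also have "msum (bsize ns) \<dots> = dmat (bsize ns) (\<lambda>u. \<exists>r\<in>set (filter (\<lambda>r. blk ns r = i) [0..<bsize ns]). u = r)"
    by (rule msum_dmat, auto)
  also have "\<dots> = Pblk ns i" unfolding Pblk_dmat by (rule eq_matI, auto)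
  finally show ?thesis .
qed


locale L10 =
  fixes ns :: "nat list" and m :: nat and \<pi> :: "complex mat \<Rightarrow> complex mat"
    and J :: "complex vec \<Rightarrow> complex vec" and \<gamma> D :: "complex mat"
  assumes ST: "finite_spectral_triple ns m \<pi> J \<gamma>"
    and Dir: "dirac_operator ns m \<pi> J \<gamma> D"
begin

abbreviation "N \<equiv> bsize ns"

lemmas rn = ring_norm[where n=m]

lemma SR: "star_rep ns m \<pi>" using ST by (simp add: finite_spectral_triple_def)

lemma pi_carrier[simp]: "a \<in> alg ns \<Longrightarrow> \<pi> a \<in> carrier_mat m m"
  using SR by (simp add: star_rep_def)
lemma pi_dims[simp]: assumes "a \<in> alg ns" shows "dim_row (\<pi> a) = m" "dim_col (\<pi> a) = m"
  using carrier_matD[OF pi_carrier[OF assms]] by auto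
lemma pi_add: "a \<in> alg ns \<Longrightarrow> b \<in> alg ns \<Longrightarrow> \<pi> (a + b) = \<pi> a + \<pi> b"
  using SR by (simp add: star_rep_def)
lemma pi_smult: "a \<in> alg ns \<Longrightarrow> \<pi> (c \<cdot>\<^sub>m a) = c \<cdot>\<^sub>m \<pi> a"
  using SR by (simp add: star_rep_def)
lemma pi_mult: "a \<in> alg ns \<Longrightarrow> b \<in> alg ns \<Longrightarrow> \<pi> (a * b) = \<pi> a * \<pi> b"
  using SR by (simp add: star_rep_def)
lemma pi_one[simp]: "\<pi> (1\<^sub>m N) = 1\<^sub>m m"
  using SR by (simp add: star_rep_def)

lemma D_carrier[simp]: "D \<in> carrier_mat m m" using Dir by (simp add: dirac_operator_def)
lemma D_dims[simp]: "dim_row D = m" "dim_col D = m" using carrier_matD[OF D_carrier] by auto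
lemma g_carrier[simp]: "\<gamma> \<in> carrier_mat m m" using ST by (simp add: finite_spectral_triple_def)
lemma g_dims[simp]: "dim_row \<gamma> = m" "dim_col \<gamma> = m" using carrier_matD[OF g_carrier] by auto
lemma D_g: "D * \<gamma> = - (\<gamma> * D)" using Dir by (simp add: dirac_operator_def)
lemma g_g: "\<gamma> * \<gamma> = 1\<^sub>m m" using ST by (simp add: finite_spectral_triple_def)
lemma g_pi: "a \<in> alg ns \<Longrightarrow> \<gamma> * \<pi> a = \<pi> a * \<gamma>" using ST by (simp add: finite_spectral_triple_def)

lemma pi_uminus: assumes a: "a \<in> alg ns" shows "\<pi> (- a) = - \<pi> a"
proof -
  have e: "- a = (-1) \<cdot>\<^sub>m a" using algD[OF a] by (intro eq_matI, auto)
  have "\<pi> (- a) = (-1) \<cdot>\<^sub>m \<pi> a" unfolding e by (rule pi_smult[OF a])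
  also have "\<dots> = - \<pi> a" using pi_carrier[OF a] by (intro eq_matI, auto)
  finally show ?thesis .
qed

lemma pi_minus: assumes a: "a \<in> alg ns" and b: "b \<in> alg ns" shows "\<pi> (a - b) = \<pi> a - \<pi> b"
proof -
  have e: "a - b = a + (- b)" using algD[OF a] algD[OF b] by (intro eq_matI, auto)
  have "\<pi> (a - b) = \<pi> a + \<pi> (- b)" unfolding e by (rule pi_add[OF a alg_uminus[OF b]])
  also have "\<dots> = \<pi> a + - \<pi> b" unfolding pi_uminus[OF b] ..
  also have "\<dots> = \<pi> a - \<pi> b" using pi_carrier[OF a] pi_carrier[OF b] by (intro eq_matI, auto)
  finally show ?thesis .
qed

lemma pi_zero[simp]: "\<pi> (0\<^sub>m N N) = 0\<^sub>m m m"
proof -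
  have e: "0\<^sub>m N N = (0::complex) \<cdot>\<^sub>m 1\<^sub>m N" by (intro eq_matI, auto)
  have "\<pi> (0\<^sub>m N N) = (0::complex) \<cdot>\<^sub>m \<pi> (1\<^sub>m N)" by (subst e, rule pi_smult[OF alg_one])
  also have "\<dots> = (0::complex) \<cdot>\<^sub>m 1\<^sub>m m" by simp
  also have "\<dots> = 0\<^sub>m m m" by (intro eq_matI, auto)
  finally show ?thesis .
qed

lemma pi_msum: "\<forall>x\<in>set xs. f x \<in> alg ns \<Longrightarrow> \<pi> (msum N (map f xs)) = msum m (map (\<lambda>x. \<pi> (f x)) xs)"
proof (induct xs)
  case Nil thus ?case by simp
next
  case (Cons a xs)
  have "msum N (map f xs) \<in> alg ns" using Cons.prems
  proof (induct xs)
    case Nil thus ?case by simp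
  next
    case (Cons b ys) thus ?case by simp
  qed
  thus ?case using Cons by (simp add: pi_add)
qed

lemma comm_carrier[simp]: "A \<in> carrier_mat m m \<Longrightarrow> B \<in> carrier_mat m m \<Longrightarrow> comm A B \<in> carrier_mat m m"
  by (simp add: comm_def)

lemma comm_mult: assumes A: "A \<in> carrier_mat m m" and B: "B \<in> carrier_mat m m"
  shows "comm D (A * B) = comm D A * B + A * comm D B"
  unfolding comm_def using A B
  by (simp add: rn, intro eq_matI, auto)

end


lemma rmul_identity: fixes X :: "complex mat" assumes c: "X \<in> carrier_mat n n" "Ca \<in> carrier_mat n n" "A0 \<in> carrier_mat n n"
  "Aa \<in> carrier_mat n n" "Cc \<in> carrier_mat n n" "Fc \<in> carrier_mat n n"
  shows "X * ((Ca * A0 + Aa * Cc) * Fc) + (- (X * Aa)) * (Cc * Fc) = X * Ca * (A0 * Fc)"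
  using c by (simp add: ring_norm[where n=n], intro eq_matI, auto)

context L10 begin

definition F :: "complex mat list \<Rightarrow> complex mat" where
  "F ws = foldr (\<lambda>a M. comm D (\<pi> a) * M) ws (1\<^sub>m m)"

definition wfw :: "complex mat list \<Rightarrow> bool" where
  "wfw w \<longleftrightarrow> w \<noteq> [] \<and> set w \<subseteq> alg ns"

definition wf :: "uform \<Rightarrow> bool" where
  "wf u \<longleftrightarrow> (\<forall>w\<in>set u. wfw w)"

lemma F_Nil[simp]: "F [] = 1\<^sub>m m" by (simp add: F_def)
lemma F_Cons[simp]: "F (a # ws) = comm D (\<pi> a) * F ws" by (simp add: F_def)

lemma F_carrier[simp]: "set ws \<subseteq> alg ns \<Longrightarrow> F ws \<in> carrier_mat m m"
  by (induct ws) auto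

lemma F_dims[simp]: assumes "set ws \<subseteq> alg ns" shows "dim_row (F ws) = m" "dim_col (F ws) = m"
  using carrier_matD[OF F_carrier[OF assms]] by auto

lemma F_append: "set xs \<subseteq> alg ns \<Longrightarrow> set ys \<subseteq> alg ns \<Longrightarrow> F (xs @ ys) = F xs * F ys"
proof (induct xs)
  case Nil thus ?case by simp
next
  case (Cons a xs)
  thus ?case by (simp add: sq_assoc[where n=m])
qed

lemma piword_eq: "piword m \<pi> D w = \<pi> (hd w) * F (tl w)"
  by (simp add: piword_def F_def)

lemma piword_carrier[simp]: "wfw w \<Longrightarrow> piword m \<pi> D w \<in> carrier_mat m m"
  unfolding piword_eq wfw_def by (cases w, auto)

lemma piform_eq: "piform m \<pi> D u = msum m (map (piword m \<pi> D) u)"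
  by (simp add: piform_def msum_def foldr_map o_def)

lemma piform_carrier[simp]: "wf u \<Longrightarrow> piform m \<pi> D u \<in> carrier_mat m m"
  unfolding piform_eq wf_def by (intro msum_carrier, auto)

lemma wf_append[simp]: "wf (u @ v) \<longleftrightarrow> wf u \<and> wf v" by (auto simp: wf_def)
lemma wf_Cons[simp]: "wf (w # v) \<longleftrightarrow> wfw w \<and> wf v" by (auto simp: wf_def)
lemma wf_Nil[simp]: "wf []" by (auto simp: wf_def)
lemma wf_concat[simp]: "wf (concat us) \<longleftrightarrow> (\<forall>u\<in>set us. wf u)" by (auto simp: wf_def)

lemma piform_append: "wf u \<Longrightarrow> wf v \<Longrightarrow> piform m \<pi> D (u @ v) = piform m \<pi> D u + piform m \<pi> D v"
  unfolding piform_eq wf_def map_append by (rule msum_append, auto)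

lemma piform_concat: "\<forall>x\<in>set xs. wf (f x) \<Longrightarrow>
   piform m \<pi> D (concat (map f xs)) = msum m (map (\<lambda>x. piform m \<pi> D (f x)) xs)"
proof (induct xs)
  case Nil thus ?case by (simp add: piform_eq)
next
  case (Cons a xs)
  thus ?case by (simp add: piform_append)
qed

lemma rmul_props: "x \<in> alg ns \<Longrightarrow> set as \<subseteq> alg ns \<Longrightarrow> b \<in> alg ns \<Longrightarrow>
  (\<forall>c\<in>set (rmul ns x as b). wfw c \<and> length c = Suc (length as)) \<and>
  piform m \<pi> D (rmul ns x as b) = \<pi> x * F as * \<pi> b"
proof (induct as arbitrary: x)
  case Nil
  thus ?case by (simp add: wfw_def piform_eq piword_eq pi_mult)
next
  case (Cons a as)
  define R where "R = rmul ns (1\<^sub>m N) as b"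
  have a: "a \<in> alg ns" and as: "set as \<subseteq> alg ns" and x: "x \<in> alg ns" and b: "b \<in> alg ns" using Cons.prems by auto
  have IH: "(\<forall>c\<in>set R. wfw c \<and> length c = Suc (length as)) \<and> piform m \<pi> D R = F as * \<pi> b"
    using Cons.hyps[OF alg_one as b] as unfolding R_def by simp
  have eq: "rmul ns x (a # as) b = concat (map (\<lambda>c. [x # (a * hd c) # tl c, (- (x * a)) # c]) R)"
    by (simp add: R_def)
  have cR: "hd c \<in> alg ns \<and> set (tl c) \<subseteq> alg ns \<and> c = hd c # tl c" if "c \<in> set R" for c
    using IH that unfolding wfw_def by (cases c, force+)
  have wfs: "\<forall>c\<in>set (rmul ns x (a # as) b). wfw c \<and> length c = Suc (length (a # as))"
    unfolding eq using IH cR x a by (auto simp: wfw_def)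
  have "piform m \<pi> D (rmul ns x (a # as) b) = msum m (map (\<lambda>c. piform m \<pi> D [x # (a * hd c) # tl c, (- (x * a)) # c]) R)"
    unfolding eq by (rule piform_concat, insert IH cR x a, auto simp: wfw_def)
  also have "\<dots> = msum m (map (\<lambda>c. \<pi> x * comm D (\<pi> a) * piword m \<pi> D c) R)"
  proof (rule arg_cong[where f="msum m"], rule map_cong[OF refl])
    fix c assume c: "c \<in> set R"
    have h: "hd c \<in> alg ns" and t: "set (tl c) \<subseteq> alg ns" and ce: "c = hd c # tl c" using cR[OF c] by auto
    have cc: "set c \<subseteq> alg ns" using h t by (subst ce, simp)
    have "piform m \<pi> D [x # (a * hd c) # tl c, (- (x * a)) # c]
      = \<pi> x * (comm D (\<pi> (a * hd c)) * F (tl c)) + \<pi> (- (x * a)) * F c"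
      using h t x a cc by (simp add: piform_eq piword_eq wfw_def)
    also have "\<dots> = \<pi> x * ((comm D (\<pi> a) * \<pi> (hd c) + \<pi> a * comm D (\<pi> (hd c))) * F (tl c))
         + (- (\<pi> x * \<pi> a)) * (comm D (\<pi> (hd c)) * F (tl c))"
      apply (subst ce) back back
      using h a x by (simp add: pi_mult pi_uminus comm_mult)
    also have "\<dots> = \<pi> x * comm D (\<pi> a) * (\<pi> (hd c) * F (tl c))"
      by (rule rmul_identity, insert h t a x, auto)
    also have "\<dots> = \<pi> x * comm D (\<pi> a) * piword m \<pi> D c" by (simp add: piword_eq)
    finally show "piform m \<pi> D [x # (a * hd c) # tl c, (- (x * a)) # c] = \<pi> x * comm D (\<pi> a) * piword m \<pi> D c" .
  qed
  also have "\<dots> = \<pi> x * comm D (\<pi> a) * msum m (map (piword m \<pi> D) R)"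
    by (subst mult_msum_left, insert IH x a, auto simp: o_def)
  also have "\<dots> = \<pi> x * F (a # as) * \<pi> b"
    using IH x a as b by (simp add: piform_eq sq_assoc[where n=m])
  finally show ?case using wfs by simp
qed

lemma wfwD: "wfw w \<Longrightarrow> hd w \<in> alg ns \<and> set (tl w) \<subseteq> alg ns \<and> w = hd w # tl w"
  unfolding wfw_def by (cases w, auto)

lemma wmul_props: assumes w: "wfw w" and v: "wfw v"
  shows "wf (wmul ns w v) \<and> piform m \<pi> D (wmul ns w v) = piword m \<pi> D w * piword m \<pi> D v"
proof -
  define R where "R = rmul ns (hd w) (tl w) (hd v)"
  have hw: "hd w \<in> alg ns" "set (tl w) \<subseteq> alg ns" and hv: "hd v \<in> alg ns" "set (tl v) \<subseteq> alg ns"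
    using wfwD[OF w] wfwD[OF v] by auto
  have P: "(\<forall>c\<in>set R. wfw c \<and> length c = Suc (length (tl w))) \<and> piform m \<pi> D R = \<pi> (hd w) * F (tl w) * \<pi> (hd v)"
    unfolding R_def by (rule rmul_props[OF hw hv(1)])
  have eq: "wmul ns w v = map (\<lambda>c. c @ tl v) R" by (simp add: wmul_def R_def)
  have wf1: "wf (wmul ns w v)" unfolding eq wf_def using P hv by (auto simp: wfw_def)
  have "piform m \<pi> D (wmul ns w v) = msum m (map (\<lambda>c. piword m \<pi> D c * F (tl v)) R)"
    unfolding eq piform_eq
  proof (simp add: o_def, rule arg_cong[where f="msum m"], rule map_cong[OF refl])
    fix c assume c: "c \<in> set R"
    have wc: "wfw c" using P c by auto
    note cc = wfwD[OF wc]
    have "piword m \<pi> D (c @ tl v) = \<pi> (hd c) * F (tl c @ tl v)"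
      using cc by (simp add: piword_eq wfw_def) (metis append_Cons list.sel(1) list.sel(3))
    also have "\<dots> = \<pi> (hd c) * (F (tl c) * F (tl v))" using cc hv by (simp add: F_append)
    also have "\<dots> = piword m \<pi> D c * F (tl v)" using cc hv by (simp add: piword_eq sq_assoc[where n=m])
    finally show "piword m \<pi> D (c @ tl v) = piword m \<pi> D c * F (tl v)" .
  qed
  also have "\<dots> = msum m (map (piword m \<pi> D) R) * F (tl v)"
    by (subst mult_msum_right, insert P hv, auto simp: o_def)
  also have "\<dots> = piword m \<pi> D w * piword m \<pi> D v"
    using P hw hv by (simp add: piform_eq piword_eq sq_assoc[where n=m])
  finally show ?thesis using wf1 by simp
qed

lemma umul_props: assumes u: "wf u" and v: "wf v"
  shows "wf (umul ns u v) \<and> piform m \<pi> D (umul ns u v) = piform m \<pi> D u * piform m \<pi> D v"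
proof -
  have wm: "wf (wmul ns w w') \<and> piform m \<pi> D (wmul ns w w') = piword m \<pi> D w * piword m \<pi> D w'"
    if "w \<in> set u" "w' \<in> set v" for w w'
    by (rule wmul_props, insert u v that, auto simp: wf_def)
  have wfi: "\<forall>w\<in>set u. \<forall>w'\<in>set v. wf (wmul ns w w')"
    using wm by blast
  have wf1: "wf (umul ns u v)" unfolding umul_def using wfi by auto
  have "piform m \<pi> D (umul ns u v) = msum m (map (\<lambda>w. piform m \<pi> D (concat (map (\<lambda>w'. wmul ns w w') v))) u)"
    unfolding umul_def by (rule piform_concat, insert wfi, auto)
  also have "\<dots> = msum m (map (\<lambda>w. piword m \<pi> D w * piform m \<pi> D v) u)"
  proof (rule arg_cong[where f="msum m"], rule map_cong[OF refl])
    fix w assume w: "w \<in> set u"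
    have "piform m \<pi> D (concat (map (\<lambda>w'. wmul ns w w') v)) = msum m (map (\<lambda>w'. piform m \<pi> D (wmul ns w w')) v)"
      by (rule piform_concat, insert wfi w, auto)
    also have "\<dots> = msum m (map (\<lambda>w'. piword m \<pi> D w * piword m \<pi> D w') v)"
      using wm w by (intro arg_cong[where f="msum m"] map_cong, auto)
    also have "\<dots> = piword m \<pi> D w * piform m \<pi> D v"
      unfolding piform_eq using w u v unfolding wf_def by (subst mult_msum_left, auto simp: o_def)
    finally show "piform m \<pi> D (concat (map (\<lambda>w'. wmul ns w w') v)) = piword m \<pi> D w * piform m \<pi> D v" .
  qed
  also have "\<dots> = piform m \<pi> D u * piform m \<pi> D v"
    unfolding piform_eq using u v unfolding wf_def by (subst mult_msum_right, auto simp: o_def)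
  finally show ?thesis using wf1 by simp
qed

lemma wf_umul[simp]: "wf u \<Longrightarrow> wf v \<Longrightarrow> wf (umul ns u v)" using umul_props by blast
lemma piform_umul: "wf u \<Longrightarrow> wf v \<Longrightarrow> piform m \<pi> D (umul ns u v) = piform m \<pi> D u * piform m \<pi> D v"
  using umul_props by blast

lemma wf_uadd[simp]: "wf (uadd u v) \<longleftrightarrow> wf u \<and> wf v" by (simp add: uadd_def)
lemma piform_uadd: "wf u \<Longrightarrow> wf v \<Longrightarrow> piform m \<pi> D (uadd u v) = piform m \<pi> D u + piform m \<pi> D v"
  by (simp add: uadd_def piform_append)

lemma wf_uneg[simp]: assumes u: "wf u" shows "wf (uneg u)"
  unfolding wf_def uneg_def
proof (simp, intro ballI)
  fix w assume "w \<in> set u"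
  hence "wfw w" using u by (auto simp: wf_def)
  from wfwD[OF this] show "wfw (- hd w # tl w)" by (auto simp: wfw_def)
qed

lemma piform_uneg: assumes u: "wf u" shows "piform m \<pi> D (uneg u) = - piform m \<pi> D u"
proof -
  have "piform m \<pi> D (uneg u) = msum m (map (\<lambda>w. - piword m \<pi> D w) u)"
    unfolding piform_eq uneg_def
  proof (simp add: o_def, rule arg_cong[where f="msum m"], rule map_cong[OF refl])
    fix w assume "w \<in> set u"
    hence w: "wfw w" using u by (auto simp: wf_def)
    note ww = wfwD[OF w]
    show "piword m \<pi> D (- hd w # tl w) = - piword m \<pi> D w"
      using ww by (simp add: piword_eq pi_uminus)
  qed
  also have "\<dots> = - piform m \<pi> D u" unfolding piform_eq using u
    by (subst msum_map_uminus, auto simp: wf_def o_def)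
  finally show ?thesis .
qed

lemma wf_usub[simp]: "wf u \<Longrightarrow> wf v \<Longrightarrow> wf (usub u v)" by (simp add: usub_def)
lemma piform_usub: assumes u: "wf u" and v: "wf v"
  shows "piform m \<pi> D (usub u v) = piform m \<pi> D u - piform m \<pi> D v"
  unfolding usub_def using u v
  by (simp add: piform_uadd piform_uneg, intro eq_matI, auto)

definition dword :: "complex mat list \<Rightarrow> complex mat" where
  "dword w = comm D (\<pi> (hd w)) * F (tl w)"

lemma wf_ud[simp]: "wf u \<Longrightarrow> wf (ud ns u)"
  unfolding wf_def ud_def wfw_def by auto

lemma piform_ud: assumes u: "wf u" shows "piform m \<pi> D (ud ns u) = msum m (map dword u)"
  unfolding piform_eq ud_def
proof (simp add: o_def, rule arg_cong[where f="msum m"], rule map_cong[OF refl])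
  fix w assume "w \<in> set u"
  hence w: "wfw w" using u by (auto simp: wf_def)
  note ww = wfwD[OF w]
  have Fw: "F w = comm D (\<pi> (hd w)) * F (tl w)" using w unfolding wfw_def by (cases w, auto)
  have sw: "set w \<subseteq> alg ns" using w unfolding wfw_def by auto
  show "piword m \<pi> D (1\<^sub>m N # w) = dword w"
    unfolding dword_def piword_eq using sw by (simp add: Fw[symmetric])
qed

lemma dword_carrier[simp]: "wfw w \<Longrightarrow> dword w \<in> carrier_mat m m"
  unfolding dword_def using wfwD by auto

lemma comm_uminus: "A \<in> carrier_mat m m \<Longrightarrow> comm D (- A) = - comm D A"
  unfolding comm_def by (intro eq_matI, auto)

lemma piform_ud_uneg: assumes u: "wf u" shows "piform m \<pi> D (ud ns (uneg u)) = - piform m \<pi> D (ud ns u)"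
proof -
  have "piform m \<pi> D (ud ns (uneg u)) = msum m (map dword (uneg u))"
    by (rule piform_ud[OF wf_uneg[OF u]])
  also have "\<dots> = msum m (map (\<lambda>w. - dword w) u)"
    unfolding uneg_def
  proof (simp add: o_def, rule arg_cong[where f="msum m"], rule map_cong[OF refl])
    fix w assume "w \<in> set u"
    hence w: "wfw w" using u by (auto simp: wf_def)
    note ww = wfwD[OF w]
    have h: "hd w \<in> alg ns" and t: "set (tl w) \<subseteq> alg ns" using ww by auto
    show "dword (- hd w # tl w) = - dword w"
      using h t by (simp add: dword_def pi_uminus comm_uminus sq_uminusL[where n=m])
  qed
  also have "\<dots> = - piform m \<pi> D (ud ns u)" unfolding piform_ud[OF u] using u
    by (subst msum_map_uminus, auto simp: wf_def)
  finally show ?thesis .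
qed

lemma ud_append: "ud ns (u @ v) = ud ns u @ ud ns v" by (simp add: ud_def)

lemma piform_ud_usub: assumes u: "wf u" and v: "wf v"
  shows "piform m \<pi> D (ud ns (usub u v)) = piform m \<pi> D (ud ns u) - piform m \<pi> D (ud ns v)"
  unfolding usub_def uadd_def ud_append using u v
  by (simp add: piform_append piform_ud_uneg, intro eq_matI, auto)

end


lemma mat_eq_by_vec: assumes A: "A \<in> carrier_mat n n'" and B: "B \<in> carrier_mat n n'"
  and eq: "\<And>v. v \<in> carrier_vec n' \<Longrightarrow> A *\<^sub>v v = B *\<^sub>v v"
  shows "A = (B :: 'a :: semiring_1 mat)"
proof (rule eq_matI)
  fix i j assume i: "i < dim_row B" and j: "j < dim_col B"
  have "(A *\<^sub>v unit_vec n' j) $ i = (B *\<^sub>v unit_vec n' j) $ i" using eq[of "unit_vec n' j"] by simp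
  thus "A $$ (i, j) = B $$ (i, j)" using A B i j by auto
qed (insert A B, auto)

lemma linear_mat:
  assumes fc: "\<And>v. v \<in> carrier_vec n \<Longrightarrow> f v \<in> carrier_vec n'"
    and fadd: "\<And>v w. v \<in> carrier_vec n \<Longrightarrow> w \<in> carrier_vec n \<Longrightarrow> f (v + w) = f v + f w"
    and fsm: "\<And>c v. v \<in> carrier_vec n \<Longrightarrow> f (c \<cdot>\<^sub>v v) = c \<cdot>\<^sub>v f v"
    and v: "v \<in> carrier_vec n"
  shows "f v = mat n' n (\<lambda>(r, s). f (unit_vec n s) $ r) *\<^sub>v (v :: 'a :: field vec)"
proof -
  define M where "M = mat n' n (\<lambda>(r, s). f (unit_vec n s) $ r)"
  define tr where "tr k = vec n (\<lambda>i. if i < k then v $ i else 0)" for k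
  have Mc: "M \<in> carrier_mat n' n" by (simp add: M_def)
  have Me: "M *\<^sub>v unit_vec n k = f (unit_vec n k)" if k: "k < n" for k
  proof (rule eq_vecI)
    show "dim_vec (M *\<^sub>v unit_vec n k) = dim_vec (f (unit_vec n k))"
      using fc[of "unit_vec n k"] by (simp add: M_def)
    fix r assume "r < dim_vec (f (unit_vec n k))"
    hence r: "r < n'" using fc[of "unit_vec n k"] by simp
    show "(M *\<^sub>v unit_vec n k) $ r = f (unit_vec n k) $ r"
      using r k by (simp add: M_def)
  qed
  have tr_c: "tr k \<in> carrier_vec n" for k by (simp add: tr_def)
  have "k \<le> n \<Longrightarrow> f (tr k) = M *\<^sub>v tr k" for k
  proof (induct k)
    case 0
    have t0: "tr 0 = 0 \<cdot>\<^sub>v 0\<^sub>v n" by (intro eq_vecI, auto simp: tr_def)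
    have "f (tr 0) = 0 \<cdot>\<^sub>v f (0\<^sub>v n)" unfolding t0 by (rule fsm, simp)
    also have "\<dots> = 0\<^sub>v n'" using fc[of "0\<^sub>v n"] by (intro eq_vecI, auto)
    also have "\<dots> = M *\<^sub>v tr 0" using Mc by (intro eq_vecI, auto simp: tr_def scalar_prod_def)
    finally show ?case .
  next
    case (Suc k)
    hence k: "k < n" by simp
    have ts: "tr (Suc k) = tr k + v $ k \<cdot>\<^sub>v unit_vec n k" by (intro eq_vecI, auto simp: tr_def unit_vec_def less_Suc_eq)
    have "f (tr (Suc k)) = f (tr k) + v $ k \<cdot>\<^sub>v f (unit_vec n k)"
      unfolding ts by (subst fadd, auto simp: tr_c fsm)
    also have "\<dots> = M *\<^sub>v tr k + v $ k \<cdot>\<^sub>v (M *\<^sub>v unit_vec n k)" using Suc k Me by simp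
    also have "\<dots> = M *\<^sub>v tr (Suc k)" unfolding ts
      by (subst mult_add_distrib_mat_vec[OF Mc], auto simp: tr_c mult_mat_vec[OF Mc])
    finally show ?case .
  qed
  moreover have "tr n = v" using v by (intro eq_vecI, auto simp: tr_def)
  ultimately show ?thesis unfolding M_def by auto
qed

lemma sq_assoc_vec: "A \<in> carrier_mat n n \<Longrightarrow> B \<in> carrier_mat n n \<Longrightarrow> v \<in> carrier_vec n \<Longrightarrow> (A * B) *\<^sub>v v = A *\<^sub>v (B *\<^sub>v v)"
  by (rule assoc_mult_mat_vec)

definition vsum' :: "nat \<Rightarrow> complex vec list \<Rightarrow> complex vec" where "vsum' = vsum"

lemma msum_vec: "\<forall>M\<in>set Ms. M \<in> carrier_mat n n \<Longrightarrow> v \<in> carrier_vec n \<Longrightarrow>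
  msum n Ms *\<^sub>v v = vsum n (map (\<lambda>M. M *\<^sub>v v) Ms)"
proof (induct Ms)
  case Nil thus ?case by (simp add: vsum_def, intro eq_vecI, auto simp: scalar_prod_def)
next
  case (Cons M Ms)
  thus ?case by (simp add: vsum_def add_mult_distrib_mat_vec[of _ n n])
qed

context L10 begin

lemma J_carrier: "v \<in> carrier_vec m \<Longrightarrow> J v \<in> carrier_vec m"
  using ST by (simp add: finite_spectral_triple_def)
lemma J_add: "v \<in> carrier_vec m \<Longrightarrow> w \<in> carrier_vec m \<Longrightarrow> J (v + w) = J v + J w"
  using ST by (simp add: finite_spectral_triple_def)
lemma J_smult: "v \<in> carrier_vec m \<Longrightarrow> J (c \<cdot>\<^sub>v v) = cnj c \<cdot>\<^sub>v J v"
  using ST by (simp add: finite_spectral_triple_def)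
lemma pi0_pi: "a \<in> alg ns \<Longrightarrow> b \<in> alg ns \<Longrightarrow> v \<in> carrier_vec m \<Longrightarrow> pi0 \<pi> J a (\<pi> b *\<^sub>v v) = \<pi> b *\<^sub>v pi0 \<pi> J a v"
  using ST by (simp add: finite_spectral_triple_def)
lemma gamma_ex: "\<exists>xys. (\<forall>(x, y) \<in> set xys. x \<in> alg ns \<and> y \<in> alg ns) \<and>
        (\<forall>v \<in> carrier_vec m. \<gamma> *\<^sub>v v = vsum m (map (\<lambda>(x, y). \<pi> x *\<^sub>v pi0 \<pi> J y v) xys))"
  using ST by (simp add: finite_spectral_triple_def)
lemma first_order: "a \<in> alg ns \<Longrightarrow> b \<in> alg ns \<Longrightarrow> v \<in> carrier_vec m \<Longrightarrow>
        comm D (\<pi> a) *\<^sub>v pi0 \<pi> J b v = pi0 \<pi> J b (comm D (\<pi> a) *\<^sub>v v)"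
  using Dir by (simp add: dirac_operator_def)

lemma adj_carrier: "A \<in> carrier_mat m m \<Longrightarrow> adj A \<in> carrier_mat m m"
  by (simp add: adj_def)

lemma pi0_carrier: "y \<in> alg ns \<Longrightarrow> v \<in> carrier_vec m \<Longrightarrow> pi0 \<pi> J y v \<in> carrier_vec m"
  unfolding pi0_def by (rule J_carrier, rule mult_mat_vec_carrier[OF adj_carrier[OF pi_carrier] J_carrier])

lemma pi0_add: assumes y: "y \<in> alg ns" and v: "v \<in> carrier_vec m" and w: "w \<in> carrier_vec m"
  shows "pi0 \<pi> J y (v + w) = pi0 \<pi> J y v + pi0 \<pi> J y w"
proof -
  have A: "adj (\<pi> y) \<in> carrier_mat m m" using adj_carrier pi_carrier y by auto
  show ?thesis unfolding pi0_def
    using A J_carrier[OF v] J_carrier[OF w]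
    by (simp add: J_add[OF v w] mult_add_distrib_mat_vec[OF A] J_add)
qed

lemma pi0_smult: assumes y: "y \<in> alg ns" and v: "v \<in> carrier_vec m"
  shows "pi0 \<pi> J y (c \<cdot>\<^sub>v v) = c \<cdot>\<^sub>v pi0 \<pi> J y v"
proof -
  have A: "adj (\<pi> y) \<in> carrier_mat m m" using adj_carrier pi_carrier y by auto
  show ?thesis unfolding pi0_def
    using A J_carrier[OF v]
    by (simp add: J_smult[OF v] mult_mat_vec[OF A] J_smult)
qed

definition G :: "complex mat \<Rightarrow> complex mat" where
  "G y = mat m m (\<lambda>(r, s). pi0 \<pi> J y (unit_vec m s) $ r)"

lemma G_carrier[simp]: "G y \<in> carrier_mat m m" by (simp add: G_def)

lemma G_vec: assumes y: "y \<in> alg ns" and v: "v \<in> carrier_vec m" shows "G y *\<^sub>v v = pi0 \<pi> J y v"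
  unfolding G_def
  by (rule linear_mat[symmetric], auto intro: pi0_carrier[OF y] pi0_add[OF y] pi0_smult[OF y] v)

lemma G_pi: assumes y: "y \<in> alg ns" and b: "b \<in> alg ns" shows "G y * \<pi> b = \<pi> b * G y"
proof (rule mat_eq_by_vec[of _ m m])
  fix v :: "complex vec" assume v: "v \<in> carrier_vec m"
  have "(G y * \<pi> b) *\<^sub>v v = G y *\<^sub>v (\<pi> b *\<^sub>v v)" using v b by (simp add: sq_assoc_vec[where n=m])
  also have "\<dots> = pi0 \<pi> J y (\<pi> b *\<^sub>v v)" by (rule G_vec[OF y mult_mat_vec_carrier[OF pi_carrier[OF b] v]])
  also have "\<dots> = \<pi> b *\<^sub>v pi0 \<pi> J y v" using v b y by (simp add: pi0_pi)
  also have "\<dots> = (\<pi> b * G y) *\<^sub>v v" using v b y by (simp add: G_vec sq_assoc_vec[where n=m])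
  finally show "(G y * \<pi> b) *\<^sub>v v = (\<pi> b * G y) *\<^sub>v v" .
qed (insert b, auto)

lemma G_comm: assumes y: "y \<in> alg ns" and b: "b \<in> alg ns" shows "G y * comm D (\<pi> b) = comm D (\<pi> b) * G y"
proof (rule mat_eq_by_vec[of _ m m])
  fix v :: "complex vec" assume v: "v \<in> carrier_vec m"
  have "(G y * comm D (\<pi> b)) *\<^sub>v v = G y *\<^sub>v (comm D (\<pi> b) *\<^sub>v v)" using v b by (simp add: sq_assoc_vec[where n=m])
  also have "\<dots> = pi0 \<pi> J y (comm D (\<pi> b) *\<^sub>v v)" by (rule G_vec[OF y mult_mat_vec_carrier[OF comm_carrier[OF D_carrier pi_carrier[OF b]] v]])
  also have "\<dots> = comm D (\<pi> b) *\<^sub>v pi0 \<pi> J y v" using v b y by (simp add: first_order)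
  also have "\<dots> = (comm D (\<pi> b) * G y) *\<^sub>v v" using v b y by (simp add: G_vec sq_assoc_vec[where n=m])
  finally show "(G y * comm D (\<pi> b)) *\<^sub>v v = (comm D (\<pi> b) * G y) *\<^sub>v v" .
qed (insert b, auto)

lemma gamma_msum: "\<exists>xys. (\<forall>(x, y) \<in> set xys. x \<in> alg ns \<and> y \<in> alg ns) \<and>
    \<gamma> = msum m (map (\<lambda>(x, y). \<pi> x * G y) xys)"
proof -
  obtain xys where xa: "\<forall>(x, y) \<in> set xys. x \<in> alg ns \<and> y \<in> alg ns"
    and gv: "\<forall>v \<in> carrier_vec m. \<gamma> *\<^sub>v v = vsum m (map (\<lambda>(x, y). \<pi> x *\<^sub>v pi0 \<pi> J y v) xys)"
    using gamma_ex by blast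
  have cM: "\<forall>M\<in>set (map (\<lambda>(x, y). \<pi> x * G y) xys). M \<in> carrier_mat m m" using xa by auto
  have "\<gamma> = msum m (map (\<lambda>(x, y). \<pi> x * G y) xys)"
  proof (rule mat_eq_by_vec[of _ m m])
    fix v :: "complex vec" assume v: "v \<in> carrier_vec m"
    have "msum m (map (\<lambda>(x, y). \<pi> x * G y) xys) *\<^sub>v v = vsum m (map (\<lambda>M. M *\<^sub>v v) (map (\<lambda>(x, y). \<pi> x * G y) xys))"
      by (rule msum_vec[OF cM v])
    also have "\<dots> = vsum m (map (\<lambda>(x, y). \<pi> x *\<^sub>v pi0 \<pi> J y v) xys)"
      unfolding map_map
    proof (rule arg_cong[where f="vsum m"], rule map_cong[OF refl])
      fix p assume p: "p \<in> set xys"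
      obtain x y where pe: "p = (x, y)" by (cases p)
      have "x \<in> alg ns" "y \<in> alg ns" using xa p pe by auto
      thus "((\<lambda>M. M *\<^sub>v v) \<circ> (\<lambda>(x, y). \<pi> x * G y)) p = (\<lambda>(x, y). \<pi> x *\<^sub>v pi0 \<pi> J y v) p"
        unfolding pe using v by (simp add: G_vec sq_assoc_vec[where n=m])
    qed
    finally show "\<gamma> *\<^sub>v v = msum m (map (\<lambda>(x, y). \<pi> x * G y) xys) *\<^sub>v v" using gv v by simp
  qed (insert cM, auto)
  thus ?thesis using xa by blast
qed

end


lemma comm_left: fixes A :: "complex mat"
  assumes "A \<in> carrier_mat n n" "B \<in> carrier_mat n n" "C \<in> carrier_mat n n" "A * B = B * A"
  shows "A * (B * C) = B * (A * C)"
proof -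
  have "A * (B * C) = (A * B) * C" using assms(1-3) by (rule sq_assoc[symmetric])
  also have "\<dots> = (B * A) * C" by (simp only: assms(4))
  also have "\<dots> = B * (A * C)" using assms(2,1,3) by (rule sq_assoc)
  finally show ?thesis .
qed

lemma neg_self_zero: fixes Z :: "complex mat"
  assumes "Z \<in> carrier_mat n n" "Z = - Z" shows "Z = 0\<^sub>m n n"
proof (rule eq_matI)
  fix i j assume "i < dim_row (0\<^sub>m n n)" "j < dim_col (0\<^sub>m n n)"
  hence ij: "i < n" "j < n" by auto
  have "Z $$ (i, j) = (- Z) $$ (i, j)" using assms(2) by simp
  also have "\<dots> = - Z $$ (i, j)" using ij assms(1) by simp
  finally show "Z $$ (i, j) = 0\<^sub>m n n $$ (i, j)" using ij by simp
qed (insert assms, auto)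

lemma comm_msum: fixes X :: "complex mat"
  assumes X: "X \<in> carrier_mat n n" and Ms: "\<forall>M\<in>set Ms. M \<in> carrier_mat n n"
    and c: "\<forall>M\<in>set Ms. X * M = M * X"
  shows "X * msum n Ms = msum n Ms * X"
proof -
  have "X * msum n Ms = msum n (map ((*) X) Ms)" by (rule mult_msum_left[OF X Ms])
  also have "map ((*) X) Ms = map (\<lambda>M. M * X) Ms" using c by auto
  also have "msum n \<dots> = msum n Ms * X" by (rule mult_msum_right[OF X Ms, symmetric])
  finally show ?thesis .
qed

context L10 begin

abbreviation p :: "nat \<Rightarrow> complex mat" where "p i \<equiv> \<pi> (Pblk ns i)"

lemma p_carrier[simp]: "p i \<in> carrier_mat m m" by simp
lemma p_dims[simp]: "dim_row (p i) = m" "dim_col (p i) = m" by simp_all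

lemma p_idem: "p i * p i = p i"
  by (simp add: pi_mult[symmetric] Pblk_mult)

lemma p_orth: "i \<noteq> j \<Longrightarrow> p i * p j = 0\<^sub>m m m"
  by (simp add: pi_mult[symmetric] Pblk_mult)

lemma p_comm: "a \<in> alg ns \<Longrightarrow> p i * \<pi> a = \<pi> a * p i"
  by (simp add: pi_mult[symmetric] Pblk_comm)

lemma p_sum: "msum m (map p [0..<length ns]) = 1\<^sub>m m"
proof -
  have "msum m (map p [0..<length ns]) = \<pi> (msum N (map (Pblk ns) [0..<length ns]))"
    by (subst pi_msum, auto)
  also have "\<dots> = 1\<^sub>m m" by (simp add: Pblk_sum)
  finally show ?thesis .
qed

lemma g_p: "\<gamma> * p i = p i * \<gamma>" by (simp add: g_pi)

lemma delta_g: assumes a: "a \<in> alg ns" shows "comm D (\<pi> a) * \<gamma> = - (\<gamma> * comm D (\<pi> a))"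
proof -
  have A: "\<pi> a \<in> carrier_mat m m" using a by simp
  have "comm D (\<pi> a) * \<gamma> = D * (\<pi> a * \<gamma>) - \<pi> a * (D * \<gamma>)"
    unfolding comm_def using A by (simp add: rn)
  also have "\<dots> = D * (\<gamma> * \<pi> a) - \<pi> a * (- (\<gamma> * D))" using g_pi[OF a] D_g by simp
  also have "\<dots> = (D * \<gamma>) * \<pi> a + (\<pi> a * \<gamma>) * D" using A by (simp add: rn, intro eq_matI, auto)
  also have "\<dots> = (- (\<gamma> * D)) * \<pi> a + (\<gamma> * \<pi> a) * D" using g_pi[OF a] D_g by simp
  also have "\<dots> = - (\<gamma> * comm D (\<pi> a))"
    unfolding comm_def using A by (simp add: rn, intro eq_matI, auto)
  finally show ?thesis .
qed

lemma gamma_block: "\<exists>cys. (\<forall>(c, y)\<in>set cys. y \<in> alg ns) \<and>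
   \<gamma> * p i = msum m (map (\<lambda>(c, y). c \<cdot>\<^sub>m G y) cys) * p i"
proof -
  obtain xys where xa: "\<forall>(x, y)\<in>set xys. x \<in> alg ns \<and> y \<in> alg ns"
    and gs: "\<gamma> = msum m (map (\<lambda>(x, y). \<pi> x * G y) xys)" using gamma_msum by blast
  define rs where "rs = filter (\<lambda>r. blk ns r = i) [0..<N]"
  have Prs: "Pblk ns i = msum N (map (\<lambda>r. E N r r) rs)" unfolding rs_def by (rule E_sum_Pblk[symmetric])
  show ?thesis
  proof (cases "rs = []")
    case True
    hence "Pblk ns i = 0\<^sub>m N N" using Prs by simp
    hence "p i = 0\<^sub>m m m" by simp
    thus ?thesis by (intro exI[of _ "[]"], simp)
  next
    case False
    define r0 where "r0 = hd rs"
    have r0in: "r0 \<in> set rs" using False unfolding r0_def by (rule hd_in_set)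
    have r0: "r0 < N" "blk ns r0 = i" using r0in unfolding rs_def by auto
    define cys where "cys = map (\<lambda>(x, y). (x $$ (r0, r0), y)) xys"
    define G' where "G' = msum m (map (\<lambda>(c, y). c \<cdot>\<^sub>m G y) cys)"
    have G'e: "G' = msum m (map (\<lambda>(x, y). x $$ (r0, r0) \<cdot>\<^sub>m G y) xys)"
      unfolding G'_def cys_def by (simp add: o_def case_prod_beta')
    have G'c: "G' \<in> carrier_mat m m" unfolding G'e by (intro msum_carrier, auto)
    have G'pi: "G' * \<pi> b = \<pi> b * G'" if b: "b \<in> alg ns" for b
    proof -
      have "\<pi> b * G' = G' * \<pi> b" unfolding G'e
      proof (rule comm_msum)
        show "\<forall>M\<in>set (map (\<lambda>(x, y). x $$ (r0, r0) \<cdot>\<^sub>m G y) xys). \<pi> b * M = M * \<pi> b"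
        proof
          fix M assume "M \<in> set (map (\<lambda>(x, y). x $$ (r0, r0) \<cdot>\<^sub>m G y) xys)"
          then obtain x y where xy: "(x, y) \<in> set xys" and M: "M = x $$ (r0, r0) \<cdot>\<^sub>m G y" by auto
          have y: "y \<in> alg ns" using xa xy by auto
          show "\<pi> b * M = M * \<pi> b" unfolding M using b y
            by (simp add: sq_smultL[where n=m] sq_smultR[where n=m] G_pi)
        qed
      qed (insert b, auto)
      thus ?thesis by simp
    qed
    have key: "\<gamma> * \<pi> (E N r r) = G' * \<pi> (E N r r)" if r: "r \<in> set rs" for r
    proof -
      have rr: "r < N" "blk ns r = i" using r unfolding rs_def by auto
      define e1 where "e1 = E N r r0"
      define e2 where "e2 = E N r0 r"
      have e1: "e1 \<in> alg ns" unfolding e1_def by (rule E_alg, insert rr r0, auto)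
      have e2: "e2 \<in> alg ns" unfolding e2_def by (rule E_alg, insert rr r0, auto)
      have Er: "E N r r \<in> alg ns" by (rule E_alg, insert rr, auto)
      have "e1 * e2 = e1 * 1\<^sub>m N * e2" unfolding e1_def by simp
      also have "\<dots> = 1\<^sub>m N $$ (r0, r0) \<cdot>\<^sub>m E N r r" unfolding e1_def e2_def
        by (rule E_sandwich, insert r0, auto)
      also have "\<dots> = E N r r" using r0 by (simp, intro eq_matI, auto)
      finally have ee: "E N r r = e1 * e2" by simp
      have "\<gamma> * \<pi> (E N r r) = \<gamma> * (\<pi> e1 * \<pi> e2)" unfolding ee using e1 e2 by (simp add: pi_mult)
      also have "\<dots> = \<pi> e1 * (\<gamma> * \<pi> e2)" by (rule comm_left, insert e1 e2 g_pi[OF e1], auto)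
      also have "\<gamma> * \<pi> e2 = msum m (map (\<lambda>(x, y). \<pi> x * G y * \<pi> e2) xys)"
        unfolding gs by (subst mult_msum_right, insert xa e2, auto simp: o_def case_prod_beta')
      also have "\<pi> e1 * \<dots> = msum m (map (\<lambda>(x, y). \<pi> e1 * (\<pi> x * G y * \<pi> e2)) xys)"
        by (subst mult_msum_left, insert xa e1 e2, auto simp: o_def case_prod_beta')
      also have "\<dots> = msum m (map (\<lambda>(x, y). \<pi> (E N r r) * (x $$ (r0, r0) \<cdot>\<^sub>m G y)) xys)"
      proof (rule arg_cong[where f="msum m"], rule map_cong[OF refl])
        fix q assume q: "q \<in> set xys"
        obtain x y where qe: "q = (x, y)" by (cases q)
        have x: "x \<in> alg ns" and y: "y \<in> alg ns" using xa q qe by auto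
        have "\<pi> e1 * (\<pi> x * G y * \<pi> e2) = \<pi> e1 * (\<pi> x * (\<pi> e2 * G y))"
          using x y e2 by (simp add: sq_assoc[where n=m] G_pi)
        also have "\<dots> = \<pi> (e1 * x * e2) * G y" using x y e1 e2 by (simp add: pi_mult rn)
        also have "e1 * x * e2 = x $$ (r0, r0) \<cdot>\<^sub>m E N r r" unfolding e1_def e2_def
          by (rule E_sandwich, insert x r0, auto dest: algD)
        also have "\<pi> \<dots> * G y = \<pi> (E N r r) * (x $$ (r0, r0) \<cdot>\<^sub>m G y)"
          using Er by (simp add: pi_smult sq_smultL[where n=m] sq_smultR[where n=m])
        finally show "(\<lambda>(x, y). \<pi> e1 * (\<pi> x * G y * \<pi> e2)) q = (\<lambda>(x, y). \<pi> (E N r r) * (x $$ (r0, r0) \<cdot>\<^sub>m G y)) q"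
          unfolding qe by simp
      qed
      also have "\<dots> = \<pi> (E N r r) * G'" unfolding G'e
        by (subst mult_msum_left, insert Er, auto simp: o_def case_prod_beta')
      also have "\<dots> = G' * \<pi> (E N r r)" using G'pi[OF Er] by simp
      finally show ?thesis .
    qed
    have Ealg: "\<forall>r\<in>set rs. E N r r \<in> alg ns" unfolding rs_def by (auto intro: E_alg)
    have pe: "p i = msum m (map (\<lambda>r. \<pi> (E N r r)) rs)" unfolding Prs by (rule pi_msum[OF Ealg])
    have "\<gamma> * p i = msum m (map (\<lambda>r. \<gamma> * \<pi> (E N r r)) rs)" unfolding pe
      by (subst mult_msum_left, insert Ealg, auto simp: o_def)
    also have "\<dots> = msum m (map (\<lambda>r. G' * \<pi> (E N r r)) rs)"
      by (rule arg_cong[where f="msum m"], rule map_cong[OF refl], rule key)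
    also have "\<dots> = G' * p i" unfolding pe
      by (subst mult_msum_left, insert Ealg G'c, auto simp: o_def)
    finally have Q: "\<gamma> * p i = G' * p i" .
    have P: "\<forall>(c, y)\<in>set cys. y \<in> alg ns" using xa unfolding cys_def by auto
    show ?thesis by (rule exI[of _ cys], rule conjI[OF P], simp only: Q G'_def)
  qed
qed

lemma key_X: assumes a: "a \<in> alg ns" shows "p i * comm D (\<pi> a) * p i = 0\<^sub>m m m"
proof -
  define d where "d = comm D (\<pi> a)"
  define X where "X = p i * d * p i"
  have dc: "d \<in> carrier_mat m m" unfolding d_def using a by simp
  have Xc: "X \<in> carrier_mat m m" unfolding X_def using dc by simp
  have Pa: "Pblk ns i \<in> alg ns" by simp
  have XG: "X * G y = G y * X" if y: "y \<in> alg ns" for y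
  proof -
    have Gp: "p i * G y = G y * p i" using G_pi[OF y Pa] by simp
    have Gd: "d * G y = G y * d" using G_comm[OF y a] unfolding d_def by simp
    have "X * G y = p i * (d * (p i * G y))" unfolding X_def using dc by (simp add: rn)
    also have "\<dots> = p i * (d * (G y * p i))" using Gp by simp
    also have "d * (G y * p i) = G y * (d * p i)" by (rule comm_left, insert dc Gd, auto)
    also have "p i * (G y * (d * p i)) = G y * (p i * (d * p i))" by (rule comm_left, insert dc Gp, auto)
    also have "\<dots> = G y * X" unfolding X_def using dc by (simp add: rn)
    finally show ?thesis .
  qed
  obtain cys where cy: "\<forall>(c, y)\<in>set cys. y \<in> alg ns"
    and gb: "\<gamma> * p i = msum m (map (\<lambda>(c, y). c \<cdot>\<^sub>m G y) cys) * p i"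
    using gamma_block by blast
  define G' where "G' = msum m (map (\<lambda>(c, y). c \<cdot>\<^sub>m G y) cys)"
  have G'c: "G' \<in> carrier_mat m m" unfolding G'_def by (intro msum_carrier, auto)
  have XG': "X * G' = G' * X" unfolding G'_def
  proof (rule comm_msum[OF Xc])
    show "\<forall>M\<in>set (map (\<lambda>(c, y). c \<cdot>\<^sub>m G y) cys). X * M = M * X"
    proof
      fix M assume "M \<in> set (map (\<lambda>(c, y). c \<cdot>\<^sub>m G y) cys)"
      then obtain c y where cyin: "(c, y) \<in> set cys" and M: "M = c \<cdot>\<^sub>m G y" by auto
      have y: "y \<in> alg ns" using cy cyin by auto
      show "X * M = M * X" unfolding M using Xc XG[OF y]
        by (simp add: sq_smultL[where n=m] sq_smultR[where n=m])
    qed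
  qed auto
  have gp: "\<gamma> * p i = G' * p i" using gb unfolding G'_def .
  have Xp: "X * p i = X" unfolding X_def using dc by (simp add: rn p_idem)
  have pX: "p i * X = X" unfolding X_def using dc by (simp add: rn p_idem flip: sq_assoc[where n=m])
  have "X * \<gamma> = (X * p i) * \<gamma>" using Xp by simp
  also have "\<dots> = X * (\<gamma> * p i)" using Xc by (simp add: rn g_p)
  also have "\<dots> = (X * G') * p i" unfolding gp using Xc G'c by (simp add: rn)
  also have "\<dots> = G' * (X * p i)" unfolding XG' using Xc G'c by (simp add: rn)
  also have "\<dots> = G' * X" using Xp by simp
  finally have e1: "X * \<gamma> = G' * X" .
  have "\<gamma> * X = (\<gamma> * p i) * X" using pX Xc by (simp add: rn)
  also have "\<dots> = G' * X" unfolding gp using Xc G'c by (simp add: rn pX)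
  finally have e2: "\<gamma> * X = G' * X" .
  have "X * \<gamma> = p i * ((d * \<gamma>) * p i)" unfolding X_def using dc by (simp add: rn g_p)
  also have "\<dots> = p i * ((- (\<gamma> * d)) * p i)" unfolding d_def using delta_g[OF a] by simp
  also have "\<dots> = - (\<gamma> * X)" unfolding X_def using dc
    by (simp add: rn, simp add: g_p flip: sq_assoc[where n=m])
  finally have e3: "X * \<gamma> = - (\<gamma> * X)" .
  have gX0: "\<gamma> * X = 0\<^sub>m m m" by (rule neg_self_zero, insert Xc G'c e1 e2 e3, auto)
  have "X = (\<gamma> * \<gamma>) * X" using g_g Xc by simp
  also have "\<dots> = \<gamma> * (\<gamma> * X)" using Xc by (simp add: rn)
  also have "\<dots> = 0\<^sub>m m m" using gX0 by simp
  finally show ?thesis unfolding X_def d_def .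
qed

end


lemma msum_single: assumes "distinct xs" "i \<in> set xs" "\<forall>j\<in>set xs. j \<noteq> i \<longrightarrow> f j = 0\<^sub>m n n"
  "\<forall>j\<in>set xs. f j \<in> carrier_mat n n"
  shows "msum n (map f xs) = f i"
  using assms
proof (induct xs)
  case Nil thus ?case by simp
next
  case (Cons a xs)
  show ?case
  proof (cases "a = i")
    case True
    hence "i \<notin> set xs" using Cons by auto
    hence e: "map f xs = map (\<lambda>j. 0\<^sub>m n n) xs" using Cons.prems by auto
    have "msum n (map f xs) = 0\<^sub>m n n" unfolding e by (rule msum_map_zero)
    thus ?thesis using True Cons.prems by simp
  next
    case False
    hence IH: "msum n (map f xs) = f i" using Cons by auto
    have "f a = 0\<^sub>m n n" using Cons.prems False by auto
    moreover have fi: "f i \<in> carrier_mat n n" using Cons.prems by auto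
    ultimately show ?thesis using IH by simp
  qed
qed

lemma msum_map_minus: "\<forall>x\<in>set xs. f x \<in> carrier_mat n n \<Longrightarrow> \<forall>x\<in>set xs. g x \<in> carrier_mat n n \<Longrightarrow>
  msum n (map (\<lambda>x. f x - g x) xs) = msum n (map f xs) - msum n (map g xs)"
proof (induct xs)
  case Nil thus ?case by (intro eq_matI) auto
next
  case (Cons a xs)
  have c: "f a \<in> carrier_mat n n" "g a \<in> carrier_mat n n" "msum n (map f xs) \<in> carrier_mat n n" "msum n (map g xs) \<in> carrier_mat n n"
    using Cons.prems by auto
  have IH: "msum n (map (\<lambda>x. f x - g x) xs) = msum n (map f xs) - msum n (map g xs)" using Cons by auto
  show ?case using c by (simp add: IH, intro eq_matI, auto)
qed

lemma sq_expand: fixes X :: "complex mat"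
  assumes X: "X \<in> carrier_mat n n" and P: "P \<in> carrier_mat n n" and PP: "P * P = P" and PXP: "P * X * P = 0\<^sub>m n n"
  shows "(X * P - P * X) * (X * P - P * X) = - (X * P * X) - P * (X * X) * P"
proof -
  have a1: "X * P * (X * P) = 0\<^sub>m n n"
  proof -
    have "X * P * (X * P) = X * (P * X * P)" using X P by (simp add: sq_assoc[where n=n])
    thus ?thesis using PXP X by simp
  qed
  have a2: "X * P * (P * X) = X * P * X"
  proof -
    have "X * P * (P * X) = X * (P * P) * X" using X P by (simp add: sq_assoc[where n=n])
    thus ?thesis using PP by simp
  qed
  have a3: "P * X * (X * P) = P * (X * X) * P" using X P by (simp add: sq_assoc[where n=n])
  have a4: "P * X * (P * X) = 0\<^sub>m n n"
  proof -
    have "P * X * (P * X) = (P * X * P) * X" using X P by (simp add: sq_assoc[where n=n])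
    thus ?thesis using PXP X by simp
  qed
  have "(X * P - P * X) * (X * P - P * X) = (X * P * (X * P) - X * P * (P * X)) - (P * X * (X * P) - P * X * (P * X))"
    using X P carrier_matD[OF X] carrier_matD[OF P]
    by (simp add: sq_minusL[where n=n] sq_minusR[where n=n], intro eq_matI, auto)
  also have "\<dots> = (0\<^sub>m n n - X * P * X) - (P * (X * X) * P - 0\<^sub>m n n)" unfolding a1 a2 a3 a4 ..
  also have "\<dots> = - (X * P * X) - P * (X * X) * P" using X P by (intro eq_matI, auto)
  finally show ?thesis .
qed

lemma msum_map_concat: "\<forall>w\<in>set (concat Ls). h w \<in> carrier_mat n n \<Longrightarrow>
  msum n (map h (concat Ls)) = msum n (map (\<lambda>L. msum n (map h L)) Ls)"
proof (induct Ls)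
  case Nil thus ?case by simp
next
  case (Cons L Ls)
  have c: "\<forall>M\<in>set (map h L @ map h (concat Ls)). M \<in> carrier_mat n n" using Cons.prems by auto
  have "msum n (map h (concat (L # Ls))) = msum n (map h L @ map h (concat Ls))" by simp
  also have "\<dots> = msum n (map h L) + msum n (map h (concat Ls))" by (rule msum_append[OF c])
  finally show ?case using Cons by simp
qed

context L10 begin

abbreviation k where "k \<equiv> length ns"

definition Dd :: "complex mat" where
  "Dd = msum m (map (\<lambda>i. p i * D * p i) [0..<k])"

lemma Dd_carrier[simp]: "Dd \<in> carrier_mat m m" unfolding Dd_def by (intro msum_carrier, auto)
lemma Dd_dims[simp]: "dim_row Dd = m" "dim_col Dd = m" using carrier_matD[OF Dd_carrier] by auto

lemma Dd_pi: assumes a: "a \<in> alg ns" shows "Dd * \<pi> a = \<pi> a * Dd"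
proof -
  have A: "\<pi> a \<in> carrier_mat m m" using a by simp
  have t: "p i * D * p i * \<pi> a = \<pi> a * (p i * D * p i)" for i
  proof -
    have "p i * D * p i * \<pi> a = p i * ((D * \<pi> a) * p i)" using A by (simp add: rn p_comm[OF a])
    also have "D * \<pi> a = comm D (\<pi> a) + \<pi> a * D" unfolding comm_def using A by (intro eq_matI, auto)
    also have "p i * ((comm D (\<pi> a) + \<pi> a * D) * p i) = p i * comm D (\<pi> a) * p i + p i * (\<pi> a * (D * p i))"
      using A by (simp add: rn)
    also have "\<dots> = \<pi> a * (p i * D * p i)" using A key_X[OF a, of i]
      by (simp add: rn, simp add: p_comm[OF a] flip: sq_assoc[where n=m])
    finally show ?thesis .
  qed
  have "Dd * \<pi> a = msum m (map (\<lambda>i. p i * D * p i * \<pi> a) [0..<k])" unfolding Dd_def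
    by (subst mult_msum_right[OF A], auto simp: o_def)
  also have "\<dots> = msum m (map (\<lambda>i. \<pi> a * (p i * D * p i)) [0..<k])" unfolding t ..
  also have "\<dots> = \<pi> a * Dd" unfolding Dd_def
    by (subst mult_msum_left[OF A], auto simp: o_def)
  finally show ?thesis .
qed

definition xh :: "complex mat" where "xh = D - Dd"

lemma xh_carrier[simp]: "xh \<in> carrier_mat m m" unfolding xh_def by simp
lemma xh_dims[simp]: "dim_row xh = m" "dim_col xh = m" using carrier_matD[OF xh_carrier] by auto

lemma comm_xh: assumes a: "a \<in> alg ns" shows "comm D (\<pi> a) = comm xh (\<pi> a)"
  unfolding comm_def xh_def using a Dd_pi[OF a]
  by (simp add: sq_minusL[where n=m] sq_minusR[where n=m], intro eq_matI, auto)

lemma p_Dd: assumes i: "i < k" shows "p i * Dd = p i * D * p i"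
proof -
  have "p i * Dd = msum m (map (\<lambda>j. p i * (p j * D * p j)) [0..<k])" unfolding Dd_def
    by (subst mult_msum_left, auto simp: o_def)
  also have "\<dots> = p i * (p i * D * p i)"
    by (rule msum_single, insert i, auto simp: rn p_orth, simp flip: sq_assoc[where n=m] add: p_orth)
  also have "\<dots> = p i * D * p i" by (simp add: rn, simp flip: sq_assoc[where n=m] add: p_idem)
  finally show ?thesis .
qed

lemma pxp: assumes i: "i < k" shows "p i * xh * p i = 0\<^sub>m m m"
proof -
  have "p i * xh * p i = p i * D * p i - p i * Dd * p i" unfolding xh_def
    by (simp add: sq_minusL[where n=m] sq_minusR[where n=m])
  also have "p i * Dd * p i = p i * D * p i" unfolding p_Dd[OF i] by (simp add: rn p_idem)
  finally have e: "p i * xh * p i = p i * D * p i - p i * D * p i" .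
  show ?thesis unfolding e by (intro eq_matI, auto)
qed

lemma comm_dims[simp]: "dim_row (comm A B) = dim_row B" "dim_col (comm A B) = dim_col A"
  by (simp_all add: comm_def)

lemma xi_eq: "xi ns = concat (map (\<lambda>i. concat (map (\<lambda>j. if i \<noteq> j then [[Pblk ns i, Pblk ns j]] else []) [0..<k])) [0..<k])"
  by (simp add: xi_def)

lemma wf_xi[simp]: "wf (xi ns)"
  unfolding xi_eq by (auto simp: wf_def wfw_def)

lemma msum_xi: assumes h: "\<And>i j. h [Pblk ns i, Pblk ns j] \<in> carrier_mat m m"
  shows "msum m (map h (xi ns)) = msum m (map (\<lambda>i. msum m (map (\<lambda>j. h [Pblk ns i, Pblk ns j]) [0..<k]) - h [Pblk ns i, Pblk ns i]) [0..<k])"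
proof -
  have "msum m (map h (xi ns)) = msum m (map (\<lambda>L. msum m (map h L)) (map (\<lambda>i. concat (map (\<lambda>j. if i \<noteq> j then [[Pblk ns i, Pblk ns j]] else []) [0..<k])) [0..<k]))"
    unfolding xi_eq by (rule msum_map_concat, auto simp: h)
  also have "\<dots> = msum m (map (\<lambda>i. msum m (map (\<lambda>j. if i \<noteq> j then h [Pblk ns i, Pblk ns j] else 0\<^sub>m m m) [0..<k])) [0..<k])"
  proof (simp only: map_map o_def, rule arg_cong[where f="msum m"], rule map_cong[OF refl])
    fix i
    have "msum m (map h (concat (map (\<lambda>j. if i \<noteq> j then [[Pblk ns i, Pblk ns j]] else []) [0..<k])))
      = msum m (map (\<lambda>L. msum m (map h L)) (map (\<lambda>j. if i \<noteq> j then [[Pblk ns i, Pblk ns j]] else []) [0..<k]))"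
      by (rule msum_map_concat, auto simp: h)
    also have "\<dots> = msum m (map (\<lambda>j. if i \<noteq> j then h [Pblk ns i, Pblk ns j] else 0\<^sub>m m m) [0..<k])"
      by (simp only: map_map o_def, rule arg_cong[where f="msum m"], rule map_cong[OF refl], auto simp: h)
    finally show "msum m (map h (concat (map (\<lambda>j. if i \<noteq> j then [[Pblk ns i, Pblk ns j]] else []) [0..<k])))
      = msum m (map (\<lambda>j. if i \<noteq> j then h [Pblk ns i, Pblk ns j] else 0\<^sub>m m m) [0..<k])" .
  qed
  also have "\<dots> = msum m (map (\<lambda>i. msum m (map (\<lambda>j. h [Pblk ns i, Pblk ns j]) [0..<k]) - h [Pblk ns i, Pblk ns i]) [0..<k])"
    by (rule arg_cong[where f="msum m"], rule map_cong[OF refl], rule msum_if_neq, auto simp: h)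
  finally show ?thesis .
qed

lemma comm_D_msum: "\<forall>j\<in>set js. f j \<in> carrier_mat m m \<Longrightarrow>
  msum m (map (\<lambda>j. comm D (f j)) js) = comm D (msum m (map f js))"
proof (induct js)
  case Nil thus ?case by (simp add: comm_def, intro eq_matI, auto)
next
  case (Cons a js)
  have c: "f a \<in> carrier_mat m m" "msum m (map f js) \<in> carrier_mat m m" using Cons.prems by auto
  have IH: "msum m (map (\<lambda>j. comm D (f j)) js) = comm D (msum m (map f js))" using Cons by auto
  have "msum m (map (\<lambda>j. comm D (f j)) (a # js)) = comm D (f a) + comm D (msum m (map f js))" using IH by simp
  also have "\<dots> = comm D (msum m (map f (a # js)))" using c by (simp add: comm_def rn, intro eq_matI, auto)
  finally show ?case .
qed

lemma comm_p_sum: "msum m (map (\<lambda>j. comm D (p j)) [0..<k]) = 0\<^sub>m m m"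
proof -
  have "msum m (map (\<lambda>j. comm D (p j)) [0..<k]) = comm D (msum m (map p [0..<k]))" by (rule comm_D_msum, simp)
  also have "\<dots> = comm D (1\<^sub>m m)" by (simp only: p_sum)
  also have "\<dots> = 0\<^sub>m m m" by (unfold comm_def, intro eq_matI, auto)
  finally show ?thesis .
qed

lemma piform_xi: "piform m \<pi> D (xi ns) = xh"
proof -
  have "piform m \<pi> D (xi ns) = msum m (map (\<lambda>i. msum m (map (\<lambda>j. piword m \<pi> D [Pblk ns i, Pblk ns j]) [0..<k]) - piword m \<pi> D [Pblk ns i, Pblk ns i]) [0..<k])"
    unfolding piform_eq by (rule msum_xi, simp add: wfw_def)
  also have "\<dots> = msum m (map (\<lambda>i. p i * D - p i * D * p i) [0..<k])"
  proof (rule arg_cong[where f="msum m"], rule map_cong[OF refl])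
    fix i
    have pw: "piword m \<pi> D [Pblk ns i, Pblk ns j] = p i * comm D (p j)" for j by (simp add: piword_eq)
    have "msum m (map (\<lambda>j. p i * comm D (p j)) [0..<k]) = p i * msum m (map (\<lambda>j. comm D (p j)) [0..<k])"
      by (subst mult_msum_left, auto simp: o_def)
    also have "\<dots> = 0\<^sub>m m m" by (simp add: comm_p_sum)
    finally have z: "msum m (map (\<lambda>j. p i * comm D (p j)) [0..<k]) = 0\<^sub>m m m" .
    have "p i * comm D (p i) = p i * D * p i - p i * D" unfolding comm_def
      by (simp add: rn, simp add: p_idem flip: sq_assoc[where n=m])
    thus "msum m (map (\<lambda>j. piword m \<pi> D [Pblk ns i, Pblk ns j]) [0..<k]) - piword m \<pi> D [Pblk ns i, Pblk ns i] = p i * D - p i * D * p i"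
      unfolding pw z by (intro eq_matI, auto)
  qed
  also have "\<dots> = msum m (map (\<lambda>i. p i * D) [0..<k]) - Dd" unfolding Dd_def
    by (rule msum_map_minus, auto)
  also have "msum m (map (\<lambda>i. p i * D) [0..<k]) = D"
    using mult_msum_right[OF D_carrier, of "map p [0..<k]"] by (simp add: p_sum o_def)
  finally show ?thesis unfolding xh_def .
qed

lemma piform_ud_xi: "piform m \<pi> D (ud ns (xi ns)) = xh * xh + msum m (map (\<lambda>i. p i * (xh * xh) * p i) [0..<k])"
proof -
  have "piform m \<pi> D (ud ns (xi ns)) = msum m (map (\<lambda>i. msum m (map (\<lambda>j. dword [Pblk ns i, Pblk ns j]) [0..<k]) - dword [Pblk ns i, Pblk ns i]) [0..<k])"
    unfolding piform_ud[OF wf_xi] by (rule msum_xi, simp add: wfw_def)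
  also have "\<dots> = msum m (map (\<lambda>i. xh * p i * xh + p i * (xh * xh) * p i) [0..<k])"
  proof (rule arg_cong[where f="msum m"], rule map_cong[OF refl])
    fix i assume i: "i \<in> set [0..<k]"
    have pw: "dword [Pblk ns i, Pblk ns j] = comm D (p i) * comm D (p j)" for j by (simp add: dword_def)
    have "msum m (map (\<lambda>j. comm D (p i) * comm D (p j)) [0..<k]) = comm D (p i) * msum m (map (\<lambda>j. comm D (p j)) [0..<k])"
      by (subst mult_msum_left, auto simp: o_def)
    also have "\<dots> = 0\<^sub>m m m" by (simp add: comm_p_sum)
    finally have z: "msum m (map (\<lambda>j. comm D (p i) * comm D (p j)) [0..<k]) = 0\<^sub>m m m" .
    have "comm D (p i) * comm D (p i) = (xh * p i - p i * xh) * (xh * p i - p i * xh)"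
      unfolding comm_xh[OF Pblk_alg] by (simp only: comm_def)
    also have "\<dots> = - (xh * p i * xh) - p i * (xh * xh) * p i"
      using i by (intro sq_expand, auto simp: p_idem pxp)
    finally have sq: "comm D (p i) * comm D (p i) = - (xh * p i * xh) - p i * (xh * xh) * p i" .
    show "msum m (map (\<lambda>j. dword [Pblk ns i, Pblk ns j]) [0..<k]) - dword [Pblk ns i, Pblk ns i] = xh * p i * xh + p i * (xh * xh) * p i"
      unfolding pw z sq by (intro eq_matI, auto)
  qed
  also have "\<dots> = msum m (map (\<lambda>i. xh * p i * xh) [0..<k]) + msum m (map (\<lambda>i. p i * (xh * xh) * p i) [0..<k])"
    by (rule msum_map_add, auto)
  also have "msum m (map (\<lambda>i. xh * p i * xh) [0..<k]) = xh * xh"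
  proof -
    have "msum m (map (\<lambda>i. xh * p i * xh) [0..<k]) = msum m (map (\<lambda>M. M * xh) (map ((*) xh) (map p [0..<k])))"
      by (simp add: o_def)
    also have "\<dots> = msum m (map ((*) xh) (map p [0..<k])) * xh"
      by (subst mult_msum_right, auto)
    also have "msum m (map ((*) xh) (map p [0..<k])) = xh * msum m (map p [0..<k])"
      by (subst mult_msum_left, auto)
    finally show ?thesis by (simp add: p_sum)
  qed
  finally show ?thesis .
qed

end


lemma dd_expand: fixes X :: "complex mat"
  assumes X: "X \<in> carrier_mat n n" and A: "A \<in> carrier_mat n n" and B: "B \<in> carrier_mat n n"
    and AB: "A * B = 0\<^sub>m n n" and AXXB: "A * (X * X) * B = 0\<^sub>m n n"
  shows "(X * A - A * X) * (X * B - B * X) = X * (A * X * B) + (A * X * B) * X"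
proof -
  have a1: "X * A * (X * B) = X * (A * X * B)" using X A B by (simp add: sq_assoc[where n=n])
  have a2: "X * A * (B * X) = 0\<^sub>m n n"
  proof -
    have "X * A * (B * X) = X * (A * B) * X" using X A B by (simp add: sq_assoc[where n=n])
    thus ?thesis using AB X by simp
  qed
  have a3: "A * X * (X * B) = 0\<^sub>m n n"
  proof -
    have "A * X * (X * B) = A * (X * X) * B" using X A B by (simp add: sq_assoc[where n=n])
    thus ?thesis using AXXB by simp
  qed
  have a4: "A * X * (B * X) = (A * X * B) * X" using X A B by (simp add: sq_assoc[where n=n])
  have "(X * A - A * X) * (X * B - B * X) = (X * A * (X * B) - X * A * (B * X)) - (A * X * (X * B) - A * X * (B * X))"
    using X A B carrier_matD[OF X] carrier_matD[OF A] carrier_matD[OF B]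
    by (simp add: sq_minusL[where n=n] sq_minusR[where n=n], intro eq_matI, auto)
  also have "\<dots> = (X * (A * X * B) - 0\<^sub>m n n) - (0\<^sub>m n n - (A * X * B) * X)" unfolding a1 a2 a3 a4 ..
  also have "\<dots> = X * (A * X * B) + (A * X * B) * X" using X A B by (intro eq_matI, auto)
  finally show ?thesis .
qed

context L10 begin

lemma word2_props: assumes c0: "c0 \<in> alg ns" and c1: "c1 \<in> alg ns"
  and AB: "\<pi> c0 * \<pi> c1 = 0\<^sub>m m m" and AZB: "\<pi> c0 * (xh * xh) * \<pi> c1 = 0\<^sub>m m m"
  shows "piword m \<pi> D [c0, c1] = \<pi> c0 * xh * \<pi> c1"
    "dword [c0, c1] = xh * piword m \<pi> D [c0, c1] + piword m \<pi> D [c0, c1] * xh"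
proof -
  have A: "\<pi> c0 \<in> carrier_mat m m" and B: "\<pi> c1 \<in> carrier_mat m m" using c0 c1 by auto
  have "piword m \<pi> D [c0, c1] = \<pi> c0 * comm xh (\<pi> c1)" using c1 by (simp add: piword_eq comm_xh)
  also have "\<dots> = \<pi> c0 * xh * \<pi> c1 - (\<pi> c0 * \<pi> c1) * xh" unfolding comm_def using A B
    by (simp add: rn)
  also have "\<dots> = \<pi> c0 * xh * \<pi> c1" unfolding AB using A B by (intro eq_matI, auto)
  finally show pw: "piword m \<pi> D [c0, c1] = \<pi> c0 * xh * \<pi> c1" .
  have "dword [c0, c1] = comm xh (\<pi> c0) * comm xh (\<pi> c1)" using c0 c1 by (simp add: dword_def comm_xh)
  also have "\<dots> = xh * (\<pi> c0 * xh * \<pi> c1) + (\<pi> c0 * xh * \<pi> c1) * xh"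
    unfolding comm_def by (rule dd_expand[OF xh_carrier A B AB AZB])
  finally show "dword [c0, c1] = xh * piword m \<pi> D [c0, c1] + piword m \<pi> D [c0, c1] * xh" unfolding pw .
qed

lemma pZ: assumes hypZ: "msum m (map (\<lambda>i. p i * (xh * xh) * p i) [0..<k]) = xh * xh" and i: "i < k"
  shows "p i * (xh * xh) = p i * (xh * xh) * p i"
proof -
  have "p i * (xh * xh) = msum m (map (\<lambda>j. p i * (p j * (xh * xh) * p j)) [0..<k])"
    by (subst hypZ[symmetric], subst mult_msum_left, auto simp: o_def)
  also have "\<dots> = p i * (p i * (xh * xh) * p i)"
    by (rule msum_single, insert i, auto simp: rn p_orth, simp flip: sq_assoc[where n=m] add: p_orth)
  also have "\<dots> = p i * (xh * xh) * p i" by (simp add: rn, simp flip: sq_assoc[where n=m] add: p_idem)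
  finally show ?thesis .
qed

definition eta1 :: "complex mat \<Rightarrow> complex mat \<Rightarrow> uform" where
  "eta1 x y = map (\<lambda>i. [x * Pblk ns i, (1\<^sub>m N - Pblk ns i) * y]) [0..<k]"

lemma eta1_word: assumes hypZ: "msum m (map (\<lambda>i. p i * (xh * xh) * p i) [0..<k]) = xh * xh"
  and x: "x \<in> alg ns" and y: "y \<in> alg ns" and i: "i < k"
  shows "piword m \<pi> D [x * Pblk ns i, (1\<^sub>m N - Pblk ns i) * y] = \<pi> x * (p i * xh) * \<pi> y"
    "dword [x * Pblk ns i, (1\<^sub>m N - Pblk ns i) * y] = xh * piword m \<pi> D [x * Pblk ns i, (1\<^sub>m N - Pblk ns i) * y] + piword m \<pi> D [x * Pblk ns i, (1\<^sub>m N - Pblk ns i) * y] * xh"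
proof -
  have X: "\<pi> x \<in> carrier_mat m m" and Y: "\<pi> y \<in> carrier_mat m m" using x y by auto
  have c0: "x * Pblk ns i \<in> alg ns" and c1: "(1\<^sub>m N - Pblk ns i) * y \<in> alg ns" using x y by auto
  have pc0: "\<pi> (x * Pblk ns i) = \<pi> x * p i" using x by (simp add: pi_mult)
  have pc1: "\<pi> ((1\<^sub>m N - Pblk ns i) * y) = (1\<^sub>m m - p i) * \<pi> y" using y by (simp add: pi_mult pi_minus)
  have q0: "p i * (1\<^sub>m m - p i) = 0\<^sub>m m m" by (simp add: rn p_idem; (intro eq_matI; auto)?)
  have q1: "p i * (xh * xh) * (1\<^sub>m m - p i) = 0\<^sub>m m m"
    using pZ[OF hypZ i] by (simp add: rn, simp flip: sq_assoc[where n=m] add: p_idem; (intro eq_matI; auto)?)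
  have AB: "\<pi> (x * Pblk ns i) * \<pi> ((1\<^sub>m N - Pblk ns i) * y) = 0\<^sub>m m m"
  proof -
    have "\<pi> (x * Pblk ns i) * \<pi> ((1\<^sub>m N - Pblk ns i) * y) = \<pi> x * (p i * (1\<^sub>m m - p i)) * \<pi> y"
      unfolding pc0 pc1 using X Y by (simp add: rn)
    thus ?thesis unfolding q0 using X Y by simp
  qed
  have AZB: "\<pi> (x * Pblk ns i) * (xh * xh) * \<pi> ((1\<^sub>m N - Pblk ns i) * y) = 0\<^sub>m m m"
  proof -
    have "\<pi> (x * Pblk ns i) * (xh * xh) * \<pi> ((1\<^sub>m N - Pblk ns i) * y) = \<pi> x * (p i * (xh * xh) * (1\<^sub>m m - p i)) * \<pi> y"
      unfolding pc0 pc1 using X Y by (simp add: rn)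
    thus ?thesis unfolding q1 using X Y by simp
  qed
  note W = word2_props[OF c0 c1 AB AZB]
  have "piword m \<pi> D [x * Pblk ns i, (1\<^sub>m N - Pblk ns i) * y] = \<pi> x * (p i * xh * (1\<^sub>m m - p i)) * \<pi> y"
    unfolding W(1) pc0 pc1 using X Y by (simp add: rn)
  also have "p i * xh * (1\<^sub>m m - p i) = p i * xh" using pxp[OF i]
    by (simp add: rn, simp flip: sq_assoc[where n=m]; (intro eq_matI; auto)?)
  finally show "piword m \<pi> D [x * Pblk ns i, (1\<^sub>m N - Pblk ns i) * y] = \<pi> x * (p i * xh) * \<pi> y" .
  show "dword [x * Pblk ns i, (1\<^sub>m N - Pblk ns i) * y] = xh * piword m \<pi> D [x * Pblk ns i, (1\<^sub>m N - Pblk ns i) * y] + piword m \<pi> D [x * Pblk ns i, (1\<^sub>m N - Pblk ns i) * y] * xh"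
    by (rule W(2))
qed

lemma wf_eta1[simp]: "x \<in> alg ns \<Longrightarrow> y \<in> alg ns \<Longrightarrow> wf (eta1 x y)"
  unfolding eta1_def wf_def wfw_def by auto

lemma uform_eta1: "x \<in> alg ns \<Longrightarrow> y \<in> alg ns \<Longrightarrow> is_uform ns 1 (eta1 x y)"
  unfolding eta1_def is_uform_def by auto

lemma piform_eta1: assumes hypZ: "msum m (map (\<lambda>i. p i * (xh * xh) * p i) [0..<k]) = xh * xh"
  and x: "x \<in> alg ns" and y: "y \<in> alg ns"
  shows "piform m \<pi> D (eta1 x y) = \<pi> x * xh * \<pi> y"
proof -
  have X: "\<pi> x \<in> carrier_mat m m" and Y: "\<pi> y \<in> carrier_mat m m" using x y by auto
  have "piform m \<pi> D (eta1 x y) = msum m (map (\<lambda>i. \<pi> x * (p i * xh) * \<pi> y) [0..<k])"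
    unfolding piform_eq eta1_def map_map o_def
    by (rule arg_cong[where f="msum m"], rule map_cong[OF refl], rule eta1_word(1)[OF hypZ x y], simp)
  also have "\<dots> = msum m (map (\<lambda>M. M * \<pi> y) (map ((*) (\<pi> x)) (map (\<lambda>i. p i * xh) [0..<k])))"
    by (simp add: o_def)
  also have "\<dots> = msum m (map ((*) (\<pi> x)) (map (\<lambda>i. p i * xh) [0..<k])) * \<pi> y"
    by (subst mult_msum_right[OF Y], auto simp: X)
  also have "msum m (map ((*) (\<pi> x)) (map (\<lambda>i. p i * xh) [0..<k])) = \<pi> x * msum m (map (\<lambda>i. p i * xh) [0..<k])"
    by (subst mult_msum_left[OF X], auto)
  also have "msum m (map (\<lambda>i. p i * xh) [0..<k]) = xh"
    using mult_msum_right[OF xh_carrier, of "map p [0..<k]"] by (simp add: p_sum o_def)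
  finally show ?thesis .
qed

lemma dprop_eta1: assumes hypZ: "msum m (map (\<lambda>i. p i * (xh * xh) * p i) [0..<k]) = xh * xh"
  and x: "x \<in> alg ns" and y: "y \<in> alg ns"
  shows "\<forall>w\<in>set (eta1 x y). dword w = xh * piword m \<pi> D w + piword m \<pi> D w * xh"
  unfolding eta1_def using eta1_word(2)[OF hypZ x y] by auto

lemma piform_ud_gen: assumes u: "wf u" and dp: "\<forall>w\<in>set u. dword w = xh * piword m \<pi> D w + piword m \<pi> D w * xh"
  shows "piform m \<pi> D (ud ns u) = xh * piform m \<pi> D u + piform m \<pi> D u * xh"
proof -
  have wu: "\<forall>w\<in>set u. wfw w" using u by (simp add: wf_def)
  have "piform m \<pi> D (ud ns u) = msum m (map (\<lambda>w. xh * piword m \<pi> D w + piword m \<pi> D w * xh) u)"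
    unfolding piform_ud[OF u] using dp by (intro arg_cong[where f="msum m"] map_cong, auto)
  also have "\<dots> = msum m (map (\<lambda>w. xh * piword m \<pi> D w) u) + msum m (map (\<lambda>w. piword m \<pi> D w * xh) u)"
    by (rule msum_map_add, insert wu, auto)
  also have "msum m (map (\<lambda>w. xh * piword m \<pi> D w) u) = xh * piform m \<pi> D u"
    unfolding piform_eq using wu by (subst mult_msum_left, auto simp: o_def)
  also have "msum m (map (\<lambda>w. piword m \<pi> D w * xh) u) = piform m \<pi> D u * xh"
    unfolding piform_eq using wu by (subst mult_msum_right, auto simp: o_def)
  finally show ?thesis .
qed

definition etaw :: "complex mat list \<Rightarrow> uform" where
  "etaw w = eta1 (hd w) (hd (tl w)) @ eta1 (- (hd w * hd (tl w))) (1\<^sub>m N)"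

lemma w2: assumes "length w = Suc 1" "set w \<subseteq> alg ns"
  shows "hd w \<in> alg ns" "hd (tl w) \<in> alg ns" "w = [hd w, hd (tl w)]"
proof -
  obtain a b where w: "w = [a, b]" using assms(1)
    by (metis One_nat_def length_0_conv length_Suc_conv)
  show "hd w \<in> alg ns" "hd (tl w) \<in> alg ns" "w = [hd w, hd (tl w)]" using assms(2) w by auto
qed

lemma etaw_props: assumes hypZ: "msum m (map (\<lambda>i. p i * (xh * xh) * p i) [0..<k]) = xh * xh"
  and wl: "length w = Suc 1" and ws: "set w \<subseteq> alg ns"
  shows "wf (etaw w)" "is_uform ns 1 (etaw w)" "piform m \<pi> D (etaw w) = piword m \<pi> D w"
    "\<forall>v\<in>set (etaw w). dword v = xh * piword m \<pi> D v + piword m \<pi> D v * xh"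
proof -
  note ab = w2[OF wl ws]
  define a where "a = hd w"
  define b where "b = hd (tl w)"
  have a: "a \<in> alg ns" and b: "b \<in> alg ns" and we: "w = [a, b]" using ab unfolding a_def b_def by auto
  have ab': "- (a * b) \<in> alg ns" using a b by simp
  have et: "etaw w = eta1 a b @ eta1 (- (a * b)) (1\<^sub>m N)" unfolding etaw_def a_def b_def ..
  show "wf (etaw w)" unfolding et using a b ab' by simp
  show "is_uform ns 1 (etaw w)" unfolding et using uform_eta1[OF a b] uform_eta1[OF ab' alg_one]
    by (auto simp: is_uform_def)
  show "\<forall>v\<in>set (etaw w). dword v = xh * piword m \<pi> D v + piword m \<pi> D v * xh"
    unfolding et using dprop_eta1[OF hypZ a b] dprop_eta1[OF hypZ ab' alg_one] by auto
  have A: "\<pi> a \<in> carrier_mat m m" and B: "\<pi> b \<in> carrier_mat m m" using a b by auto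
  have "piform m \<pi> D (etaw w) = \<pi> a * xh * \<pi> b + \<pi> (- (a * b)) * xh * \<pi> (1\<^sub>m N)"
    unfolding et using a b ab' by (simp add: piform_append piform_eta1[OF hypZ])
  also have "\<dots> = \<pi> a * comm xh (\<pi> b)" using A B a b
    by (simp add: pi_uminus pi_mult comm_def rn; (intro eq_matI; auto)?)
  also have "\<dots> = piword m \<pi> D w" unfolding we using b by (simp add: piword_eq comm_xh)
  finally show "piform m \<pi> D (etaw w) = piword m \<pi> D w" .
qed

end


context L10 begin

lemma sub_self: "(A :: complex mat) \<in> carrier_mat n n \<Longrightarrow> A - A = 0\<^sub>m n n"
  by (intro eq_matI, auto)

lemma piform_Nil[simp]: "piform m \<pi> D [] = 0\<^sub>m m m" by (simp add: piform_eq)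

lemma omega_eq_direct: assumes u: "wf u" and v: "wf v" and e: "piform m \<pi> D u = piform m \<pi> D v"
  shows "omega_eq ns m \<pi> D 2 u v"
  unfolding omega_eq_def
proof (intro exI[of _ "[]"] conjI)
  show "is_uform ns (2 - 1) []" by (simp add: is_uform_def)
  show "piform m \<pi> D [] = 0\<^sub>m m m" by simp
  have "usub (usub u v) (ud ns []) = usub u v" by (simp add: usub_def uadd_def uneg_def ud_def)
  moreover have "piform m \<pi> D (usub u v) = 0\<^sub>m m m" using u v
    by (simp add: piform_usub e; (intro eq_matI; auto)?)
  ultimately show "piform m \<pi> D (usub (usub u v) (ud ns [])) = 0\<^sub>m m m" by simp
qed

lemma uform_wf: "is_uform ns n u \<Longrightarrow> wf u"
  unfolding is_uform_def wf_def wfw_def by fastforce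

lemma uform_uneg: assumes u: "is_uform ns n u" shows "is_uform ns n (uneg u)"
  unfolding is_uform_def uneg_def
proof (intro ballI)
  fix w assume "w \<in> set (map (\<lambda>w. (- hd w) # tl w) u)"
  then obtain v where v: "v \<in> set u" and w: "w = (- hd v) # tl v" by auto
  have "length v = Suc n" "set v \<subseteq> alg ns" using u v unfolding is_uform_def by auto
  thus "length w = Suc n \<and> set w \<subseteq> alg ns" unfolding w by (cases v, auto)
qed

lemma part3: assumes hypZ: "msum m (map (\<lambda>i. p i * (xh * xh) * p i) [0..<k]) = xh * xh"
  and om: "is_uform ns 1 \<omega>"
  shows "omega_eq ns m \<pi> D 2 (ud ns \<omega>) (uadd (umul ns (xi ns) \<omega>) (umul ns \<omega> (xi ns)))"
proof -
  have wo: "wf \<omega>" by (rule uform_wf[OF om])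
  have ow: "length w = Suc 1" "set w \<subseteq> alg ns" if "w \<in> set \<omega>" for w
    using om that unfolding is_uform_def by auto
  define eta where "eta = concat (map etaw \<omega>)"
  have we: "wf eta" unfolding eta_def using etaw_props(1)[OF hypZ ow] by auto
  have ue: "is_uform ns 1 eta" unfolding eta_def using etaw_props(2)[OF hypZ ow]
    by (auto simp: is_uform_def)
  have pe: "piform m \<pi> D eta = piform m \<pi> D \<omega>"
  proof -
    have "piform m \<pi> D eta = msum m (map (\<lambda>w. piform m \<pi> D (etaw w)) \<omega>)"
      unfolding eta_def by (rule piform_concat, insert etaw_props(1)[OF hypZ ow], auto)
    also have "\<dots> = msum m (map (piword m \<pi> D) \<omega>)"
      by (rule arg_cong[where f="msum m"], rule map_cong[OF refl], rule etaw_props(3)[OF hypZ ow], auto)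
    finally show ?thesis by (simp add: piform_eq)
  qed
  have de: "piform m \<pi> D (ud ns eta) = xh * piform m \<pi> D eta + piform m \<pi> D eta * xh"
    by (rule piform_ud_gen[OF we], unfold eta_def, insert etaw_props(4)[OF hypZ ow], auto)
  define j where "j = usub \<omega> eta"
  have uj: "is_uform ns (2 - 1) j" unfolding j_def usub_def uadd_def
    using om uform_uneg[OF ue] by (auto simp: is_uform_def)
  have wj: "wf j" unfolding j_def using wo we by simp
  have pj: "piform m \<pi> D j = 0\<^sub>m m m" unfolding j_def using wo we
    by (simp add: piform_usub pe; (intro eq_matI; auto)?)
  have Oc: "piform m \<pi> D \<omega> \<in> carrier_mat m m" using wo by simp
  have "piform m \<pi> D (usub (usub (ud ns \<omega>) (uadd (umul ns (xi ns) \<omega>) (umul ns \<omega> (xi ns)))) (ud ns j))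
     = (piform m \<pi> D (ud ns \<omega>) - (xh * piform m \<pi> D \<omega> + piform m \<pi> D \<omega> * xh))
       - (piform m \<pi> D (ud ns \<omega>) - (xh * piform m \<pi> D \<omega> + piform m \<pi> D \<omega> * xh))"
    unfolding j_def using wo we
    by (simp add: piform_usub piform_uadd piform_umul piform_xi piform_ud_usub de pe)
  also have "\<dots> = 0\<^sub>m m m" using wo Oc by (intro sub_self, simp)
  finally have main: "piform m \<pi> D (usub (usub (ud ns \<omega>) (uadd (umul ns (xi ns) \<omega>) (umul ns \<omega> (xi ns)))) (ud ns j)) = 0\<^sub>m m m" .
  show ?thesis unfolding omega_eq_def using uj pj main unfolding j_def by blast
qed

end


context L10 begin

lemma wf_P[simp]: "wf [[Pblk ns i]]" by (simp add: wfw_def)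
lemma piform_P: "piform m \<pi> D [[Pblk ns i]] = p i" by (simp add: piform_eq piword_eq)

lemma part1: assumes hypZ: "msum m (map (\<lambda>i. p i * (xh * xh) * p i) [0..<k]) = xh * xh"
  shows "omega_eq ns m \<pi> D 2
           (concat (map (\<lambda>i. umul ns (umul ns [[Pblk ns i]] (umul ns (xi ns) (xi ns))) [[Pblk ns i]])
              [0..<length ns]))
           (umul ns (xi ns) (xi ns))"
proof (rule omega_eq_direct)
  show "wf (concat (map (\<lambda>i. umul ns (umul ns [[Pblk ns i]] (umul ns (xi ns) (xi ns))) [[Pblk ns i]]) [0..<length ns]))"
    by (simp add: wfw_def)
  show "wf (umul ns (xi ns) (xi ns))" by simp
  have "piform m \<pi> D (concat (map (\<lambda>i. umul ns (umul ns [[Pblk ns i]] (umul ns (xi ns) (xi ns))) [[Pblk ns i]]) [0..<length ns]))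
    = msum m (map (\<lambda>i. piform m \<pi> D (umul ns (umul ns [[Pblk ns i]] (umul ns (xi ns) (xi ns))) [[Pblk ns i]])) [0..<length ns])"
    by (rule piform_concat, simp add: wfw_def)
  also have "\<dots> = msum m (map (\<lambda>i. p i * (xh * xh) * p i) [0..<k])"
    by (simp add: piform_umul piform_P piform_xi wfw_def)
  also have "\<dots> = piform m \<pi> D (umul ns (xi ns) (xi ns))" by (simp add: hypZ piform_umul piform_xi)
  finally show "piform m \<pi> D (concat (map (\<lambda>i. umul ns (umul ns [[Pblk ns i]] (umul ns (xi ns) (xi ns))) [[Pblk ns i]]) [0..<length ns]))
    = piform m \<pi> D (umul ns (xi ns) (xi ns))" .
qed

lemma part2: assumes hypZ: "msum m (map (\<lambda>i. p i * (xh * xh) * p i) [0..<k]) = xh * xh"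
  shows "omega_eq ns m \<pi> D 2 (ud ns (xi ns)) (uadd (umul ns (xi ns) (xi ns)) (umul ns (xi ns) (xi ns)))"
  by (rule omega_eq_direct, simp, simp, simp add: piform_ud_xi hypZ piform_uadd piform_umul piform_xi)

lemma part4: assumes hypZ: "msum m (map (\<lambda>i. p i * (xh * xh) * p i) [0..<k]) = xh * xh"
  shows "let H = uneg (uadd (xi ns) (xi ns)) in omega_eq ns m \<pi> D 2 (uadd (ud ns H) (umul ns H H)) []"
  unfolding Let_def
proof (rule omega_eq_direct)
  show "wf (uadd (ud ns (uneg (uadd (xi ns) (xi ns)))) (umul ns (uneg (uadd (xi ns) (xi ns))) (uneg (uadd (xi ns) (xi ns)))))"
    by simp
  show "wf []" by simp
  have pH: "piform m \<pi> D (uneg (uadd (xi ns) (xi ns))) = - (xh + xh)"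
    by (simp add: piform_uneg piform_uadd piform_xi)
  have dH: "piform m \<pi> D (ud ns (uneg (uadd (xi ns) (xi ns)))) = - ((xh * xh + xh * xh) + (xh * xh + xh * xh))"
    by (simp add: piform_ud_uneg uadd_def ud_append piform_append piform_ud_xi hypZ)
  have "piform m \<pi> D (uadd (ud ns (uneg (uadd (xi ns) (xi ns)))) (umul ns (uneg (uadd (xi ns) (xi ns))) (uneg (uadd (xi ns) (xi ns)))))
     = - ((xh * xh + xh * xh) + (xh * xh + xh * xh)) + (- (xh + xh)) * (- (xh + xh))"
    by (simp add: piform_uadd piform_umul pH dH)
  also have "\<dots> = 0\<^sub>m m m"
    by (simp add: rn; (intro eq_matI; auto)?)
  finally show "piform m \<pi> D (uadd (ud ns (uneg (uadd (xi ns) (xi ns)))) (umul ns (uneg (uadd (xi ns) (xi ns))) (uneg (uadd (xi ns) (xi ns))))) = piform m \<pi> D []"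
    by simp
qed

end

theorem lemma10:
  fixes ns :: "nat list" and m :: nat and \<pi> :: "complex mat \<Rightarrow> complex mat"
    and J :: "complex vec \<Rightarrow> complex vec" and \<gamma> D :: "complex mat"
  assumes ST: "finite_spectral_triple ns m \<pi> J \<gamma>"
    and Dir: "dirac_operator ns m \<pi> J \<gamma> D"
    and hyp: "piform m \<pi> D (xi ns) * piform m \<pi> D (xi ns) =
      foldr (\<lambda>i M. \<pi> (Pblk ns i) * (piform m \<pi> D (xi ns) * piform m \<pi> D (xi ns)) * \<pi> (Pblk ns i) + M)
        [0..<length ns] (0\<^sub>m m m)"
  shows "omega_eq ns m \<pi> D 2
           (concat (map (\<lambda>i. umul ns (umul ns [[Pblk ns i]] (umul ns (xi ns) (xi ns))) [[Pblk ns i]])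
              [0..<length ns]))
           (umul ns (xi ns) (xi ns)) \<and>
         omega_eq ns m \<pi> D 2 (ud ns (xi ns))
           (uadd (umul ns (xi ns) (xi ns)) (umul ns (xi ns) (xi ns))) \<and>
         (\<forall>\<omega>. is_uform ns 1 \<omega> \<longrightarrow>
           omega_eq ns m \<pi> D 2 (ud ns \<omega>) (uadd (umul ns (xi ns) \<omega>) (umul ns \<omega> (xi ns)))) \<and>
         (let H = uneg (uadd (xi ns) (xi ns)) in
           omega_eq ns m \<pi> D 2 (uadd (ud ns H) (umul ns H H)) [])"
proof -
  interpret L: L10 ns m \<pi> J \<gamma> D using ST Dir by (unfold_locales)
  have hypZ: "msum m (map (\<lambda>i. L.p i * (L.xh * L.xh) * L.p i) [0..<length ns]) = L.xh * L.xh"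
    using hyp unfolding L.piform_xi msum_def foldr_map o_def by simp
  show ?thesis using L.part1[OF hypZ] L.part2[OF hypZ] L.part3[OF hypZ] L.part4[OF hypZ] by blast
qed


end
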